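(* Consider the bounded overflow sharing model in the following scaling regime, indexed by $N\to\infty$: for fixed $\alpha_1,\alpha_2>0$, $\beta_1,\beta_2\in\mathbb{R}$, $\gamma_1,\gamma_2\ge 0$, $N_i=\alpha_iN$, $a_i=N_i+\beta_i\sqrt{N_i}+o(\sqrt{N_i})$, $k_i=\gamma_i\sqrt{N_i}+o(\sqrt{N_i})$ for $i=1,2$. Then, for $i\in\{1,2\}$, as $N\to\infty$, $$B_i^{(bo)}(k_1,k_2)\sim\frac{1}{\sqrt N}\,\frac{\tilde A_i}{\tilde G},$$ where $$\tilde A_i=\frac{\phi\!\left(\gamma_{-i}\sqrt{\alpha_{-i}/\alpha_i}-\beta_i\right)}{\sqrt{\alpha_i}}\,\Phi(-\gamma_{-i}-\beta_{-i})+\frac{1}{\sqrt{\alpha_1\alpha_2}}\int_{-\gamma_1\sqrt{\alpha_1}}^{\gamma_2\sqrt{\alpha_2}}\phi\!\left(\frac{x}{\sqrt{\alpha_1}}-\beta_1\right)\phi\!\left(\frac{-x}{\sqrt{\alpha_2}}-\beta_2\right)dx,$$ $$\tilde G=\Phi\!\left(\gamma_1\sqrt{\alpha_1/\alpha_2}-\beta_2\right)\Phi(-\gamma_1-\beta_1)+\frac{1}{\sqrt{\alpha_1}}\int_{-\gamma_1\sqrt{\alpha_1}}^{\gamma_2\sqrt{\alpha_2}}\phi\!\left(\frac{x}{\sqrt{\alpha_1}}-\beta_1\right)\Phi\!\left(\frac{-x}{\sqrt{\alpha_2}}-\beta_2\right)dx.$$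
   Context: Two service providers $P_1,P_2$. Provider $P_i$ has $N_i$ servers (a positive integer); its calls arrive as a Poisson process of rate $\lambda_i>0$ with i.i.d. holding times of mean $1/\mu_i<\infty$, all independent; offered load $a_i=\lambda_i/\mu_i$. $-i$ denotes the index other than $i$. $n_i$ is the number of active calls of $P_i$; calls are not attached to specific servers (call repacking). Bounded overflow model with parameter $(k_1,k_2)$, $k_i\in[0,N_i]$, $\{k\}=k-\lfloor k\rfloor$: an arriving call of $P_{-i}$ is admitted if $n_{-i}<N_{-i}+\lfloor k_i\rfloor$ and $n_1+n_2<N_1+N_2$; admitted with probability $\{k_i\}$ if $n_{-i}=N_{-i}+\lfloor k_i\rfloor$ and $n_1+n_2<N_1+N_2$; otherwise blocked. $B_i^{(bo)}(k_1,k_2)$ is the steady-state probability that an arriving call of $P_i$ is blocked. $\phi$ and $\Phi$ are the standard Gaussian density and distribution function; $f\sim g$ means $f/g\to 1$. *)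

theory Defs
  imports "HOL-Probability.Probability" "HOL-Library.Landau_Symbols"
begin

text \<open>Standard Gaussian density phi is the library's std_normal_density; Phi is its distribution function.\<close>
definition Phi :: "real \<Rightarrow> real" where
  "Phi x = (LBINT t:{..x}. std_normal_density t)"

text \<open>Bounded overflow model. States are pairs (n1, n2) of active calls.
  Parameters: N1 N2 (servers), k1 k2 (overflow bounds), l1 l2 (arrival rates), u1 u2 (service rates).\<close>

definition bo_states :: "nat \<Rightarrow> nat \<Rightarrow> (nat \<times> nat) set" where
  "bo_states N1 N2 = {(n1, n2). n1 + n2 \<le> N1 + N2}"

text \<open>Admission probability of an arriving call of P1 in state (n1,n2):
  P1 = P_{-2}, so its bound uses k2.\<close>
definition bo_adm1 :: "nat \<Rightarrow> nat \<Rightarrow> real \<Rightarrow> real \<Rightarrow> nat \<times> nat \<Rightarrow> real" where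
  "bo_adm1 N1 N2 k1 k2 s =
     (if fst s + snd s < N1 + N2 then
        (if int (fst s) < int N1 + \<lfloor>k2\<rfloor> then 1
         else if int (fst s) = int N1 + \<lfloor>k2\<rfloor> then frac k2 else 0)
      else 0)"

definition bo_adm2 :: "nat \<Rightarrow> nat \<Rightarrow> real \<Rightarrow> real \<Rightarrow> nat \<times> nat \<Rightarrow> real" where
  "bo_adm2 N1 N2 k1 k2 s =
     (if fst s + snd s < N1 + N2 then
        (if int (snd s) < int N2 + \<lfloor>k1\<rfloor> then 1
         else if int (snd s) = int N2 + \<lfloor>k1\<rfloor> then frac k1 else 0)
      else 0)"

text \<open>Transition rate from state x to state y (x \<noteq> y) of the CTMC (with call repacking).\<close>
definition bo_rate :: "nat \<Rightarrow> nat \<Rightarrow> real \<Rightarrow> real \<Rightarrow> real \<Rightarrow> real \<Rightarrow> real \<Rightarrow> real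
    \<Rightarrow> nat \<times> nat \<Rightarrow> nat \<times> nat \<Rightarrow> real" where
  "bo_rate N1 N2 k1 k2 l1 l2 u1 u2 x y =
     (if y = (Suc (fst x), snd x) then l1 * bo_adm1 N1 N2 k1 k2 x else 0)
   + (if y = (fst x, Suc (snd x)) then l2 * bo_adm2 N1 N2 k1 k2 x else 0)
   + (if 0 < fst x \<and> y = (fst x - 1, snd x) then real (fst x) * u1 else 0)
   + (if 0 < snd x \<and> y = (fst x, snd x - 1) then real (snd x) * u2 else 0)"

definition bo_stationary :: "nat \<Rightarrow> nat \<Rightarrow> real \<Rightarrow> real \<Rightarrow> real \<Rightarrow> real \<Rightarrow> real \<Rightarrow> real
    \<Rightarrow> (nat \<times> nat \<Rightarrow> real) \<Rightarrow> bool" where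
  "bo_stationary N1 N2 k1 k2 l1 l2 u1 u2 p \<longleftrightarrow>
     (\<forall>x. 0 \<le> p x) \<and> (\<forall>x. x \<notin> bo_states N1 N2 \<longrightarrow> p x = 0) \<and>
     (\<Sum>x\<in>bo_states N1 N2. p x) = 1 \<and>
     (\<forall>x\<in>bo_states N1 N2.
        p x * (\<Sum>y\<in>bo_states N1 N2 - {x}. bo_rate N1 N2 k1 k2 l1 l2 u1 u2 x y)
        = (\<Sum>y\<in>bo_states N1 N2 - {x}. p y * bo_rate N1 N2 k1 k2 l1 l2 u1 u2 y x))"

definition bo_pi :: "nat \<Rightarrow> nat \<Rightarrow> real \<Rightarrow> real \<Rightarrow> real \<Rightarrow> real \<Rightarrow> real \<Rightarrow> real
    \<Rightarrow> nat \<times> nat \<Rightarrow> real" where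
  "bo_pi N1 N2 k1 k2 l1 l2 u1 u2 = (THE p. bo_stationary N1 N2 k1 k2 l1 l2 u1 u2 p)"

text \<open>Blocking probability seen by an arriving call (Poisson arrivals see time averages).\<close>
definition B1_bo :: "nat \<Rightarrow> nat \<Rightarrow> real \<Rightarrow> real \<Rightarrow> real \<Rightarrow> real \<Rightarrow> real \<Rightarrow> real \<Rightarrow> real" where
  "B1_bo N1 N2 k1 k2 l1 l2 u1 u2 =
     (\<Sum>x\<in>bo_states N1 N2. bo_pi N1 N2 k1 k2 l1 l2 u1 u2 x * (1 - bo_adm1 N1 N2 k1 k2 x))"

definition B2_bo :: "nat \<Rightarrow> nat \<Rightarrow> real \<Rightarrow> real \<Rightarrow> real \<Rightarrow> real \<Rightarrow> real \<Rightarrow> real \<Rightarrow> real" where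
  "B2_bo N1 N2 k1 k2 l1 l2 u1 u2 =
     (\<Sum>x\<in>bo_states N1 N2. bo_pi N1 N2 k1 k2 l1 l2 u1 u2 x * (1 - bo_adm2 N1 N2 k1 k2 x))"

end

theory Submission
  imports Defs
begin

definition acut :: "real \<Rightarrow> nat \<Rightarrow> nat \<Rightarrow> real" where
  "acut k N n = (if int n < int N + \<lfloor>k\<rfloor> then 1 else if int n = int N + \<lfloor>k\<rfloor> then frac k else 0)"

fun cutw :: "real \<Rightarrow> nat \<Rightarrow> nat \<Rightarrow> real" where
  "cutw k N 0 = 1"
| "cutw k N (Suc n) = cutw k N n * acut k N n"

lemma acut_nonneg: "0 \<le> acut k N n"
  by (auto simp: acut_def frac_ge_0)

lemma acut_le1: "acut k N n \<le> 1"
  by (auto simp: acut_def less_imp_le[OF frac_lt_1])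

lemma cutw_nonneg: "0 \<le> cutw k N n"
  by (induction n) (auto simp: acut_nonneg)

lemma cutw_le1: "cutw k N n \<le> 1"
  by (induction n) (auto intro: mult_le_one simp: acut_nonneg acut_le1 cutw_nonneg)

lemma acut_nat:
  assumes "0 \<le> k"
  shows "acut k N n = (if n < N + nat \<lfloor>k\<rfloor> then 1 else if n = N + nat \<lfloor>k\<rfloor> then frac k else 0)"
proof -
  have "\<lfloor>k\<rfloor> \<ge> 0" using assms by simp
  then have e: "int N + \<lfloor>k\<rfloor> = int (N + nat \<lfloor>k\<rfloor>)" by simp
  show ?thesis unfolding acut_def e of_nat_less_iff of_nat_eq_iff by simp
qed

lemma cutw_explicit:
  assumes "0 \<le> k"
  shows "cutw k N n = (if n \<le> N + nat \<lfloor>k\<rfloor> then 1 else if n = N + nat \<lfloor>k\<rfloor> + 1 then frac k else 0)"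
proof (induction n)
  case 0 then show ?case by simp
next
  case (Suc n)
  show ?case using Suc by (auto simp: acut_nat[OF assms])
qed

lemma adm1_acut: "bo_adm1 N1 N2 k1 k2 s = (if fst s + snd s < N1 + N2 then acut k2 N1 (fst s) else 0)"
  by (simp add: bo_adm1_def acut_def)

lemma adm2_acut: "bo_adm2 N1 N2 k1 k2 s = (if fst s + snd s < N1 + N2 then acut k1 N2 (snd s) else 0)"
  by (simp add: bo_adm2_def acut_def)

definition rho :: "real \<Rightarrow> real \<Rightarrow> nat \<Rightarrow> nat \<Rightarrow> real" where
  "rho a k N n = a ^ n / fact n * cutw k N n"

definition wt :: "nat \<Rightarrow> nat \<Rightarrow> real \<Rightarrow> real \<Rightarrow> real \<Rightarrow> real \<Rightarrow> nat \<times> nat \<Rightarrow> real" where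
  "wt N1 N2 k1 k2 a1 a2 x = (if fst x + snd x \<le> N1 + N2 then rho a1 k2 N1 (fst x) * rho a2 k1 N2 (snd x) else 0)"

lemma finite_bo_states: "finite (bo_states N1 N2)"
proof -
  have "bo_states N1 N2 \<subseteq> {..N1+N2} \<times> {..N1+N2}" by (auto simp: bo_states_def)
  then show ?thesis by (rule finite_subset) auto
qed

lemma rho_nonneg: "0 < a \<Longrightarrow> 0 \<le> rho a k N n"
  by (simp add: rho_def cutw_nonneg)

lemma rho_Suc: "rho a k N (Suc n) * real (Suc n) = a * rho a k N n * acut k N n"
proof -
  have f: "(fact (Suc n)::real) = real (Suc n) * fact n" by simp
  have p: "real (Suc n) > 0" "(fact n::real) > 0" by simp_all
  show ?thesis unfolding rho_def cutw.simps f power_Suc using p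
    by (simp add: field_simps del: of_nat_Suc)
qed

context
  fixes N1 N2 :: nat and k1 k2 l1 l2 u1 u2 :: real
  assumes pos: "0 < l1" "0 < l2" "0 < u1" "0 < u2" "0 \<le> k1" "0 \<le> k2"
begin

abbreviation "S \<equiv> bo_states N1 N2"
abbreviation "q \<equiv> bo_rate N1 N2 k1 k2 l1 l2 u1 u2"
abbreviation "W \<equiv> wt N1 N2 k1 k2 (l1/u1) (l2/u2)"

lemma adm_nonneg: "0 \<le> bo_adm1 N1 N2 k1 k2 x" "0 \<le> bo_adm2 N1 N2 k1 k2 x"
  unfolding adm1_acut adm2_acut by (simp_all add: acut_nonneg)

lemma rate_nonneg: "0 \<le> q x y"
  unfolding bo_rate_def
  by (intro add_nonneg_nonneg) (simp_all add: adm_nonneg pos less_imp_le)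

lemma W_nonneg: "0 \<le> W x"
  unfolding wt_def using pos by (simp add: rho_nonneg)

lemma db_up1:
  assumes "(Suc a, b) \<in> S"
  shows "W (a,b) * q (a,b) (Suc a, b) = W (Suc a, b) * q (Suc a, b) (a,b)"
proof -
  have lt: "a + b < N1 + N2" using assms by (simp add: bo_states_def)
  have q1: "q (a,b) (Suc a, b) = l1 * acut k2 N1 a" using lt by (auto simp add: bo_rate_def adm1_acut)
  have q2: "q (Suc a, b) (a,b) = real (Suc a) * u1" by (simp add: bo_rate_def)
  have r: "rho (l1/u1) k2 N1 (Suc a) * real (Suc a) = (l1/u1) * rho (l1/u1) k2 N1 a * acut k2 N1 a"
    by (rule rho_Suc)
  have w1: "W (a,b) = rho (l1/u1) k2 N1 a * rho (l2/u2) k1 N2 b" using lt by (simp add: wt_def)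
  have w2: "W (Suc a, b) = rho (l1/u1) k2 N1 (Suc a) * rho (l2/u2) k1 N2 b" using lt by (simp add: wt_def)
  have "W (Suc a, b) * q (Suc a, b) (a,b) = rho (l2/u2) k1 N2 b * u1 * (rho (l1/u1) k2 N1 (Suc a) * real (Suc a))"
    unfolding w2 q2 by (simp only: ac_simps)
  also have "\<dots> = W (a,b) * q (a,b) (Suc a, b)" unfolding r w1 q1 using pos by (simp add: field_simps)
  finally show ?thesis by simp
qed

lemma db_up2:
  assumes "(a, Suc b) \<in> S"
  shows "W (a,b) * q (a,b) (a, Suc b) = W (a, Suc b) * q (a, Suc b) (a,b)"
proof -
  have lt: "a + b < N1 + N2" using assms by (simp add: bo_states_def)
  have q1: "q (a,b) (a, Suc b) = l2 * acut k1 N2 b" using lt by (auto simp add: bo_rate_def adm2_acut)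
  have q2: "q (a, Suc b) (a,b) = real (Suc b) * u2" by (simp add: bo_rate_def)
  have r: "rho (l2/u2) k1 N2 (Suc b) * real (Suc b) = (l2/u2) * rho (l2/u2) k1 N2 b * acut k1 N2 b"
    by (rule rho_Suc)
  have w1: "W (a,b) = rho (l1/u1) k2 N1 a * rho (l2/u2) k1 N2 b" using lt by (simp add: wt_def)
  have w2: "W (a, Suc b) = rho (l1/u1) k2 N1 a * rho (l2/u2) k1 N2 (Suc b)" using lt by (simp add: wt_def)
  have "W (a, Suc b) * q (a, Suc b) (a,b) = rho (l1/u1) k2 N1 a * u2 * (rho (l2/u2) k1 N2 (Suc b) * real (Suc b))"
    unfolding w2 q2 by (simp only: ac_simps)
  also have "\<dots> = W (a,b) * q (a,b) (a, Suc b)" unfolding r w1 q1 using pos by (simp add: field_simps)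
  finally show ?thesis by simp
qed

lemma rate_zero:
  assumes "(c,d) \<noteq> (Suc a, b)" "(c,d) \<noteq> (a, Suc b)" "(a,b) \<noteq> (Suc c, d)" "(a,b) \<noteq> (c, Suc d)"
  shows "q (a,b) (c,d) = 0"
proof -
  have h3: "\<not> (0 < a \<and> (c,d) = (a - 1, b))" using assms(3) by auto
  have h4: "\<not> (0 < b \<and> (c,d) = (a, b - 1))" using assms(4) by auto
  show ?thesis unfolding bo_rate_def fst_conv snd_conv
    by (simp only: if_not_P[OF assms(1)] if_not_P[OF assms(2)] if_not_P[OF h3] if_not_P[OF h4] add_0)
qed

lemma detailed:
  assumes "x \<in> S" "y \<in> S"
  shows "W x * q x y = W y * q y x"
proof -
  obtain a b where x: "x = (a,b)" by (cases x)
  obtain c d where y: "y = (c,d)" by (cases y)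
  show ?thesis
  proof (cases "y = (Suc a, b)")
    case True then show ?thesis using db_up1[of a b] assms x by simp
  next
    case n1: False
    show ?thesis
    proof (cases "x = (Suc c, d)")
      case True then show ?thesis using db_up1[of c d] assms y by simp
    next
      case n2: False
      show ?thesis
      proof (cases "y = (a, Suc b)")
        case True then show ?thesis using db_up2[of a b] assms x by simp
      next
        case n3: False
        show ?thesis
        proof (cases "x = (c, Suc d)")
          case True then show ?thesis using db_up2[of c d] assms y by simp
        next
          case n4: False
          have "q x y = 0" unfolding x y by (rule rate_zero) (use n1 n2 n3 n4 x y in auto)
          moreover have "q y x = 0" unfolding x y by (rule rate_zero) (use n1 n2 n3 n4 x y in auto)
          ultimately show ?thesis by simp
        qed
      qed
    qed
  qed
qed


lemma W_out: "x \<notin> S \<Longrightarrow> W x = 0"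
  by (auto simp: wt_def bo_states_def)

lemma W00: "W (0,0) = 1"
  by (simp add: wt_def rho_def)

lemma zero_in_S: "(0,0) \<in> S" by (simp add: bo_states_def)

definition "Zs = (\<Sum>x\<in>S. W x)"

lemma Zs_pos: "0 < Zs"
proof -
  have "W (0,0) \<le> Zs" unfolding Zs_def
    by (rule member_le_sum) (auto simp: zero_in_S W_nonneg finite_bo_states)
  then show ?thesis using W00 by simp
qed

lemma stationary_W: "bo_stationary N1 N2 k1 k2 l1 l2 u1 u2 (\<lambda>x. W x / Zs)"
  unfolding bo_stationary_def
proof (intro conjI allI impI ballI)
  fix x show "0 \<le> W x / Zs" using W_nonneg Zs_pos by simp
next
  fix x assume "x \<notin> S" then show "W x / Zs = 0" by (simp add: W_out)
next
  show "(\<Sum>x\<in>S. W x / Zs) = 1" using Zs_pos unfolding Zs_def by (simp add: sum_divide_distrib[symmetric])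
next
  fix x assume x: "x \<in> S"
  have "W x / Zs * (\<Sum>y\<in>S - {x}. q x y) = (\<Sum>y\<in>S - {x}. W x * q x y / Zs)"
    by (simp add: sum_distrib_left)
  also have "\<dots> = (\<Sum>y\<in>S - {x}. W y / Zs * q y x)"
    by (rule sum.cong) (use x detailed in auto)
  finally show "W x / Zs * (\<Sum>y\<in>S - {x}. q x y) = (\<Sum>y\<in>S - {x}. W y / Zs * q y x)" .
qed

lemma cutw_pos_pred: "0 < cutw k N (Suc n) \<Longrightarrow> 0 < cutw k N n \<and> 0 < acut k N n"
  using cutw_nonneg[of k N n] acut_nonneg[of k N n] by (auto simp: zero_less_mult_iff)

lemma cutw_pos_le: "0 < cutw k N n \<Longrightarrow> m \<le> n \<Longrightarrow> 0 < cutw k N m"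
proof (induction n arbitrary: m)
  case 0 then show ?case by simp
next
  case (Suc n) then show ?case using cutw_pos_pred[of k N n] le_Suc_eq by blast
qed

lemma acut_mono_zero: "acut k N j = 0 \<Longrightarrow> j \<le> j' \<Longrightarrow> acut k N j' = 0"
  by (auto simp: acut_def split: if_splits)

lemma cutw_zero_acut: "cutw k N n = 0 \<Longrightarrow> \<exists>j. n = Suc j \<and> acut k N j = 0"
proof (induction n)
  case 0 then show ?case by simp
next
  case (Suc n)
  show ?case
  proof (cases "acut k N n = 0")
    case True then show ?thesis by simp
  next
    case False
    then have "cutw k N n = 0" using Suc.prems by simp
    then obtain j where "n = Suc j" "acut k N j = 0" using Suc.IH by blast
    then have "acut k N n = 0" using acut_mono_zero by auto
    then show ?thesis using False by simp
  qed
qed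

lemma rho_pos_iff: "0 < a \<Longrightarrow> 0 < rho a k N n \<longleftrightarrow> 0 < cutw k N n"
proof -
  assume a: "0 < a"
  have h: "0 < a ^ n / fact n" using a by simp
  show ?thesis unfolding rho_def using h by (simp only: zero_less_mult_iff) auto
qed

lemma W_pos_iff: "0 < W (a,b) \<longleftrightarrow> a + b \<le> N1 + N2 \<and> 0 < cutw k2 N1 a \<and> 0 < cutw k1 N2 b"
proof -
  have p1: "0 < l1/u1" "0 < l2/u2" using pos by simp_all
  have "0 \<le> rho (l1/u1) k2 N1 a" "0 \<le> rho (l2/u2) k1 N2 b" using p1 by (simp_all add: rho_nonneg)
  then show ?thesis unfolding wt_def using rho_pos_iff[OF p1(1)] rho_pos_iff[OF p1(2)]
    by (auto simp: zero_less_mult_iff)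
qed


lemma cut_balance:
  assumes st: "bo_stationary N1 N2 k1 k2 l1 l2 u1 u2 p" and A: "A \<subseteq> S"
  shows "(\<Sum>x\<in>A. \<Sum>y\<in>S-A. p x * q x y) = (\<Sum>x\<in>A. \<Sum>y\<in>S-A. p y * q y x)"
proof -
  have bal: "\<And>x. x \<in> S \<Longrightarrow> p x * (\<Sum>y\<in>S-{x}. q x y) = (\<Sum>y\<in>S-{x}. p y * q y x)"
    using st unfolding bo_stationary_def by blast
  have finS: "finite S" by (rule finite_bo_states)
  have finA: "finite A" using A finS finite_subset by blast
  have e: "(\<Sum>y\<in>A. p x * q x y) + (\<Sum>y\<in>S-A. p x * q x y) = (\<Sum>y\<in>A. p y * q y x) + (\<Sum>y\<in>S-A. p y * q y x)"
    if x: "x \<in> A" for x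
  proof -
    have xS: "x \<in> S" using x A by blast
    have split: "sum f (S-{x}) = sum f A - f x + sum f (S - A)" for f :: "nat \<times> nat \<Rightarrow> real"
    proof -
      have "S-{x} = (A-{x}) \<union> (S-A)" using x A by blast
      then have "sum f (S-{x}) = sum f (A-{x}) + sum f (S-A)"
        by (simp add: sum.union_disjoint finA finS Diff_Int_distrib2) 
      also have "sum f (A-{x}) = sum f A - f x" using finA x by (simp add: sum_diff1)
      finally show ?thesis .
    qed
    have "(\<Sum>y\<in>S-{x}. p x * q x y) = (\<Sum>y\<in>S-{x}. p y * q y x)"
      using bal[OF xS] by (simp add: sum_distrib_left)
    then show ?thesis unfolding split by simp
  qed
  have "(\<Sum>x\<in>A. (\<Sum>y\<in>A. p x * q x y) + (\<Sum>y\<in>S-A. p x * q x y)) = (\<Sum>x\<in>A. (\<Sum>y\<in>A. p y * q y x) + (\<Sum>y\<in>S-A. p y * q y x))"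
    by (rule sum.cong) (auto simp: e)
  moreover have "(\<Sum>x\<in>A. \<Sum>y\<in>A. p x * q x y) = (\<Sum>x\<in>A. \<Sum>y\<in>A. p y * q y x)"
    by (rule sum.swap)
  ultimately show ?thesis by (simp add: sum.distrib)
qed


lemma st_nonneg: "bo_stationary N1 N2 k1 k2 l1 l2 u1 u2 p \<Longrightarrow> 0 \<le> p x"
  unfolding bo_stationary_def by blast

lemma zero_layer1:
  assumes st: "bo_stationary N1 N2 k1 k2 l1 l2 u1 u2 p" and ac: "acut k2 N1 j = 0" and x0S: "(Suc j, b) \<in> S"
  shows "p (Suc j, b) = 0"
proof -
  define A where "A = {x\<in>S. j < fst x}"
  have AS: "A \<subseteq> S" by (auto simp: A_def)
  have finS: "finite S" by (rule finite_bo_states)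
  have finA: "finite A" using AS finS finite_subset by blast
  have qz: "q y x = 0" if x: "x \<in> A" and y: "y \<in> S - A" for x y
  proof -
    obtain a b' where xe: "x = (a,b')" by (cases x)
    obtain c d where ye: "y = (c,d)" by (cases y)
    have ja: "j < a" using x xe by (simp add: A_def)
    have cj: "c \<le> j" using y ye by (auto simp: A_def)
    have adm: "bo_adm1 N1 N2 k1 k2 (c,d) = 0" if "c = j"
      using ac that by (simp add: adm1_acut)
    have h2: "x \<noteq> (c, Suc d)" using xe ja cj by auto
    have h3: "\<not> (0 < c \<and> x = (c - 1, d))" using xe ja cj by auto
    have h4: "\<not> (0 < d \<and> x = (c, d - 1))" using xe ja cj by auto
    have h1: "(if x = (Suc c, d) then l1 * bo_adm1 N1 N2 k1 k2 (c,d) else 0) = 0"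
    proof (cases "x = (Suc c, d)")
      case True
      then have "c = j" using xe ja cj by auto
      then show ?thesis using adm by simp
    qed simp
    show ?thesis unfolding ye bo_rate_def fst_conv snd_conv
      by (simp only: h1 if_not_P[OF h2] if_not_P[OF h3] if_not_P[OF h4] add_0)
  qed
  have R0: "(\<Sum>x\<in>A. \<Sum>y\<in>S-A. p y * q y x) = 0"
    by (rule sum.neutral, rule ballI, rule sum.neutral) (auto simp: qz)
  have x0A: "(Suc j, b) \<in> A" using x0S by (simp add: A_def)
  have y0: "(j, b) \<in> S - A" using x0S by (auto simp: A_def bo_states_def)
  have qx0: "q (Suc j, b) (j, b) = real (Suc j) * u1" by (simp add: bo_rate_def)
  have nn: "0 \<le> p x * q x y" for x y using st_nonneg[OF st] rate_nonneg by simp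
  have "p (Suc j, b) * q (Suc j, b) (j, b) \<le> (\<Sum>y\<in>S-A. p (Suc j, b) * q (Suc j, b) y)"
    by (rule member_le_sum[OF y0]) (use nn finS in auto)
  also have "\<dots> \<le> (\<Sum>x\<in>A. \<Sum>y\<in>S-A. p x * q x y)"
    by (rule member_le_sum[OF x0A, where f="\<lambda>x. \<Sum>y\<in>S-A. p x * q x y"]) (use nn finA in \<open>auto intro: sum_nonneg\<close>)
  also have "\<dots> = 0" using cut_balance[OF st AS] R0 by simp
  finally have "p (Suc j, b) * (real (Suc j) * u1) \<le> 0" unfolding qx0 .
  moreover have "0 < real (Suc j) * u1" using pos by simp
  ultimately have "p (Suc j, b) \<le> 0" using pos(3) by (simp add: mult_le_0_iff)
  then show ?thesis using st_nonneg[OF st] by (simp add: order_antisym)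
qed


lemma zero_layer2:
  assumes st: "bo_stationary N1 N2 k1 k2 l1 l2 u1 u2 p" and ac: "acut k1 N2 j = 0" and x0S: "(b, Suc j) \<in> S"
  shows "p (b, Suc j) = 0"
proof -
  define A where "A = {x\<in>S. j < snd x}"
  have AS: "A \<subseteq> S" by (auto simp: A_def)
  have finS: "finite S" by (rule finite_bo_states)
  have finA: "finite A" using AS finS finite_subset by blast
  have qz: "q y x = 0" if x: "x \<in> A" and y: "y \<in> S - A" for x y
  proof -
    obtain b' a where xe: "x = (b',a)" by (cases x)
    obtain d c where ye: "y = (d,c)" by (cases y)
    have ja: "j < a" using x xe by (simp add: A_def)
    have cj: "c \<le> j" using y ye by (auto simp: A_def)
    have adm: "bo_adm2 N1 N2 k1 k2 (d,c) = 0" if "c = j"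
      using ac that by (simp add: adm2_acut)
    have h2: "x \<noteq> (Suc d, c)" using xe ja cj by auto
    have h3: "\<not> (0 < d \<and> x = (d - 1, c))" using xe ja cj by auto
    have h4: "\<not> (0 < c \<and> x = (d, c - 1))" using xe ja cj by auto
    have h1: "(if x = (d, Suc c) then l2 * bo_adm2 N1 N2 k1 k2 (d,c) else 0) = 0"
    proof (cases "x = (d, Suc c)")
      case True
      then have "c = j" using xe ja cj by auto
      then show ?thesis using adm by simp
    qed simp
    show ?thesis unfolding ye bo_rate_def fst_conv snd_conv
      by (simp only: h1 if_not_P[OF h2] if_not_P[OF h3] if_not_P[OF h4] add_0 add_0_right)
  qed
  have R0: "(\<Sum>x\<in>A. \<Sum>y\<in>S-A. p y * q y x) = 0"
    by (rule sum.neutral, rule ballI, rule sum.neutral) (auto simp: qz)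
  have x0A: "(b, Suc j) \<in> A" using x0S by (simp add: A_def)
  have y0: "(b, j) \<in> S - A" using x0S by (auto simp: A_def bo_states_def)
  have qx0: "q (b, Suc j) (b, j) = real (Suc j) * u2" by (simp add: bo_rate_def)
  have nn: "0 \<le> p x * q x y" for x y using st_nonneg[OF st] rate_nonneg by simp
  have "p (b, Suc j) * q (b, Suc j) (b, j) \<le> (\<Sum>y\<in>S-A. p (b, Suc j) * q (b, Suc j) y)"
    by (rule member_le_sum[OF y0]) (use nn finS in auto)
  also have "\<dots> \<le> (\<Sum>x\<in>A. \<Sum>y\<in>S-A. p x * q x y)"
    by (rule member_le_sum[OF x0A, where f="\<lambda>x. \<Sum>y\<in>S-A. p x * q x y"]) (use nn finA in \<open>auto intro: sum_nonneg\<close>)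
  also have "\<dots> = 0" using cut_balance[OF st AS] R0 by simp
  finally have "p (b, Suc j) * (real (Suc j) * u2) \<le> 0" unfolding qx0 .
  moreover have "0 < real (Suc j) * u2" using pos by simp
  ultimately have "p (b, Suc j) \<le> 0" using pos(4) by (simp add: mult_le_0_iff)
  then show ?thesis using st_nonneg[OF st] by (simp add: order_antisym)
qed

lemma zero_off_supp:
  assumes st: "bo_stationary N1 N2 k1 k2 l1 l2 u1 u2 p" and xS: "x \<in> S" and W0: "\<not> 0 < W x"
  shows "p x = 0"
proof -
  obtain a b where xe: "x = (a,b)" by (cases x)
  have "a + b \<le> N1 + N2" using xS xe by (simp add: bo_states_def)
  then have "\<not> 0 < cutw k2 N1 a \<or> \<not> 0 < cutw k1 N2 b" using W0 xe W_pos_iff by simp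
  then have "cutw k2 N1 a = 0 \<or> cutw k1 N2 b = 0" using cutw_nonneg by (metis order_less_le)
  then show ?thesis
  proof
    assume "cutw k2 N1 a = 0"
    then obtain j where "a = Suc j" "acut k2 N1 j = 0" using cutw_zero_acut by blast
    then show ?thesis using zero_layer1[OF st] xS xe by simp
  next
    assume "cutw k1 N2 b = 0"
    then obtain j where "b = Suc j" "acut k1 N2 j = 0" using cutw_zero_acut by blast
    then show ?thesis using zero_layer2[OF st] xS xe by simp
  qed
qed


lemma supp_closed:
  assumes xS: "x \<in> S" and Wx: "0 < W x" and yS: "y \<in> S" and Wy: "\<not> 0 < W y"
  shows "q x y = 0"
proof -
  obtain a b where xe: "x = (a,b)" by (cases x)
  obtain c d where ye: "y = (c,d)" by (cases y)
  have cx: "a + b \<le> N1 + N2" "0 < cutw k2 N1 a" "0 < cutw k1 N2 b" using Wx xe W_pos_iff by auto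
  have cy: "c + d \<le> N1 + N2" using yS ye by (simp add: bo_states_def)
  have cy2: "\<not> 0 < cutw k2 N1 c \<or> \<not> 0 < cutw k1 N2 d" using Wy ye W_pos_iff cy by simp
  show ?thesis
  proof (cases "y = (Suc a, b)")
    case True
    then have "c = Suc a" "d = b" using ye by auto
    then have "\<not> 0 < cutw k2 N1 (Suc a)" using cy2 cx by simp
    then have "acut k2 N1 a = 0" using cx(2) acut_nonneg[of k2 N1 a] by (simp add: zero_less_mult_iff order_less_le)
    then show ?thesis unfolding xe True by (auto simp add: bo_rate_def adm1_acut)
  next
    case n1: False
    show ?thesis
    proof (cases "y = (a, Suc b)")
      case True
      then have "c = a" "d = Suc b" using ye by auto
      then have "\<not> 0 < cutw k1 N2 (Suc b)" using cy2 cx by simp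
      then have "acut k1 N2 b = 0" using cx(3) acut_nonneg[of k1 N2 b] by (simp add: zero_less_mult_iff order_less_le)
      then show ?thesis unfolding xe True by (auto simp add: bo_rate_def adm2_acut)
    next
      case n2: False
      have n3: "x \<noteq> (Suc c, d)"
      proof
        assume "x = (Suc c, d)"
        then have "a = Suc c" "b = d" using xe by auto
        then show False using cx cy2 cutw_pos_le[of k2 N1 a c] by simp
      qed
      have n4: "x \<noteq> (c, Suc d)"
      proof
        assume "x = (c, Suc d)"
        then have "b = Suc d" "a = c" using xe by auto
        then show False using cx cy2 cutw_pos_le[of k1 N2 b d] by simp
      qed
      show ?thesis unfolding xe ye by (rule rate_zero) (use n1 n2 n3 n4 xe ye in auto)
    qed
  qed
qed

lemma harmonic:
  assumes st: "bo_stationary N1 N2 k1 k2 l1 l2 u1 u2 p" and xS: "x \<in> S" and Wx: "0 < W x"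
  shows "(\<Sum>y\<in>S-{x}. (p x / W x - p y / W y) * q x y) = 0"
proof -
  define h where "h y = p y / W y" for y
  have key: "p y * q y x = h y * (W x * q x y)" if yS: "y \<in> S" for y
  proof (cases "0 < W y")
    case True
    then have "p y = h y * W y" by (simp add: h_def)
    then show ?thesis using detailed[OF xS yS] by simp
  next
    case False
    then have "p y = 0" using zero_off_supp[OF st yS] by simp
    then show ?thesis by (simp add: h_def)
  qed
  have bal: "p x * (\<Sum>y\<in>S-{x}. q x y) = (\<Sum>y\<in>S-{x}. p y * q y x)"
    using st xS unfolding bo_stationary_def by blast
  also have "\<dots> = W x * (\<Sum>y\<in>S-{x}. h y * q x y)"
    by (simp add: sum_distrib_left key ac_simps)
  finally have e: "h x * W x * (\<Sum>y\<in>S-{x}. q x y) = W x * (\<Sum>y\<in>S-{x}. h y * q x y)"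
    using Wx by (simp add: h_def)
  then have "h x * (\<Sum>y\<in>S-{x}. q x y) = (\<Sum>y\<in>S-{x}. h y * q x y)" using Wx by (simp add: ac_simps)
  then have "(\<Sum>y\<in>S-{x}. (h x - h y) * q x y) = 0"
    by (simp add: left_diff_distrib sum_subtractf sum_distrib_left)
  then show ?thesis by (simp add: h_def)
qed

definition "supp = {x\<in>S. 0 < W x}"

lemma descend:
  fixes g :: "nat \<times> nat \<Rightarrow> real"
  assumes harm: "\<And>x. x \<in> supp \<Longrightarrow> (\<Sum>y\<in>S-{x}. (g x - g y) * q x y) = 0"
  shows "x \<in> supp \<Longrightarrow> (\<forall>y\<in>supp. g y \<le> g x) \<Longrightarrow> g (0,0) = g x"
proof (induction "fst x + snd x" arbitrary: x)
  case 0
  then show ?case by (cases x) auto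
next
  case (Suc n)
  obtain a b where xe: "x = (a,b)" by (cases x)
  have xS: "x \<in> S" and Wx: "0 < W x" using Suc.prems by (auto simp: supp_def)
  have cx: "a + b \<le> N1 + N2" "0 < cutw k2 N1 a" "0 < cutw k1 N2 b" using Wx xe W_pos_iff by auto
  have finS: "finite S" by (rule finite_bo_states)
  have terms: "\<forall>z\<in>S-{x}. (g x - g z) * q x z = 0"
  proof -
    have nn: "\<forall>z\<in>S-{x}. 0 \<le> (g x - g z) * q x z"
    proof
      fix z assume z: "z \<in> S - {x}"
      show "0 \<le> (g x - g z) * q x z"
      proof (cases "0 < W z")
        case True
        then have "z \<in> supp" using z by (simp add: supp_def)
        then have "g z \<le> g x" using Suc.prems(2) by blast
        then show ?thesis using rate_nonneg by simp
      next
        case False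
        then have "q x z = 0" using supp_closed[OF xS Wx] z by auto
        then show ?thesis by simp
      qed
    qed
    have "(\<Sum>z\<in>S-{x}. (g x - g z) * q x z) = 0" using harm Suc.prems(1) by simp
    then show ?thesis using sum_nonneg_eq_0_iff[of "S-{x}" "\<lambda>z. (g x - g z) * q x z"] nn finS by simp
  qed
  show ?case
  proof (cases a)
    case (Suc a')
    define y where "y = (a', b)"
    have ysupp: "y \<in> supp" using cx Suc cutw_pos_le[of k2 N1 a a']
      by (auto simp: supp_def y_def bo_states_def W_pos_iff)
    have yS: "y \<in> S - {x}" using ysupp xe Suc by (auto simp: supp_def y_def)
    have qy: "q x y = real a * u1" using xe Suc by (simp add: bo_rate_def y_def)
    have "(g x - g y) * q x y = 0" using terms yS by blast
    then have gy: "g y = g x" using qy Suc pos by simp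
    have "g (0,0) = g y"
      by (rule Suc.hyps) (use Suc.hyps(2) xe \<open>a = Suc a'\<close> ysupp gy Suc.prems in \<open>auto simp: y_def\<close>)
    then show ?thesis using gy by simp
  next
    case 0
    then obtain b' where b: "b = Suc b'" using Suc.hyps(2) xe by (cases b) auto
    define y where "y = (a, b')"
    have ysupp: "y \<in> supp" using cx b cutw_pos_le[of k1 N2 b b']
      by (auto simp: supp_def y_def bo_states_def W_pos_iff)
    have yS: "y \<in> S - {x}" using ysupp xe b by (auto simp: supp_def y_def)
    have qy: "q x y = real b * u2" using xe b by (simp add: bo_rate_def y_def)
    have "(g x - g y) * q x y = 0" using terms yS by blast
    then have gy: "g y = g x" using qy b pos by simp
    have "g (0,0) = g y"
      by (rule Suc.hyps) (use Suc.hyps(2) xe b ysupp gy Suc.prems in \<open>auto simp: y_def\<close>)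
    then show ?thesis using gy by simp
  qed
qed


lemma stationary_unique:
  assumes st: "bo_stationary N1 N2 k1 k2 l1 l2 u1 u2 p"
  shows "p = (\<lambda>x. W x / Zs)"
proof -
  define h where "h y = p y / W y" for y
  have harm: "(\<Sum>y\<in>S-{x}. (h x - h y) * q x y) = 0" if "x \<in> supp" for x
    using harmonic[OF st] that by (simp add: supp_def h_def)
  have harm2: "(\<Sum>y\<in>S-{x}. ((-h) x - (-h) y) * q x y) = 0" if "x \<in> supp" for x
  proof -
    have "(\<Sum>y\<in>S-{x}. ((-h) x - (-h) y) * q x y) = - (\<Sum>y\<in>S-{x}. (h x - h y) * q x y)"
      by (simp add: sum_negf[symmetric] algebra_simps)
    then show ?thesis using harm[OF that] by simp
  qed
  have finsupp: "finite supp" unfolding supp_def using finite_bo_states by simp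
  have s0: "(0,0) \<in> supp" using W00 zero_in_S by (simp add: supp_def)
  have exmax: "\<exists>x0\<in>supp. \<forall>y\<in>supp. g y \<le> g x0" for g :: "nat \<times> nat \<Rightarrow> real"
  proof -
    have ne: "g ` supp \<noteq> {}" using s0 by auto
    have "Max (g ` supp) \<in> g ` supp" using finsupp ne by (rule Max_in[OF finite_imageI])
    then obtain x0 where x0: "x0 \<in> supp" "g x0 = Max (g ` supp)" by auto
    have "\<forall>y\<in>supp. g y \<le> g x0" using x0 finsupp by simp
    then show ?thesis using x0 by blast
  qed
  obtain xM where xM: "xM \<in> supp" "\<forall>y\<in>supp. h y \<le> h xM" using exmax by blast
  obtain xm where xm: "xm \<in> supp" "\<forall>y\<in>supp. (-h) y \<le> (-h) xm" using exmax by blast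
  have hM: "h (0,0) = h xM" using descend[of h, OF harm xM] by simp
  have hm: "(-h) (0,0) = (-h) xm" using descend[of "-h", OF harm2 xm] by simp
  define c where "c = h (0,0)"
  have hc: "h x = c" if "x \<in> supp" for x
    using xM(2) xm(2) that hM hm by (force simp: c_def)
  have pc: "p x = c * W x" for x
  proof (cases "x \<in> supp")
    case True
    then have "0 < W x" by (simp add: supp_def)
    then show ?thesis using hc[OF True] by (simp add: h_def field_simps)
  next
    case False
    show ?thesis
    proof (cases "x \<in> S")
      case True
      then have "\<not> 0 < W x" using False by (simp add: supp_def)
      then have "W x = 0" using W_nonneg[of x] by simp
      then show ?thesis using zero_off_supp[OF st True] \<open>\<not> 0 < W x\<close> by simp
    next
      case False
      then have "p x = 0" using st unfolding bo_stationary_def by blast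
      then show ?thesis using W_out[OF False] by simp
    qed
  qed
  have "1 = (\<Sum>x\<in>S. p x)" using st unfolding bo_stationary_def by simp
  also have "\<dots> = c * Zs" unfolding Zs_def pc by (simp add: sum_distrib_left)
  finally have "c = 1 / Zs" using Zs_pos by (simp add: field_simps)
  then show ?thesis using pc by (auto simp: fun_eq_iff)
qed

lemma bo_pi_eq: "bo_pi N1 N2 k1 k2 l1 l2 u1 u2 = (\<lambda>x. W x / Zs)"
  unfolding bo_pi_def
proof (rule the_equality)
  show "bo_stationary N1 N2 k1 k2 l1 l2 u1 u2 (\<lambda>x. W x / Zs)" by (rule stationary_W)
next
  fix p assume "bo_stationary N1 N2 k1 k2 l1 l2 u1 u2 p"
  then show "p = (\<lambda>x. W x / Zs)" by (rule stationary_unique)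
qed

end


context
  fixes N1 N2 :: nat and k1 k2 l1 l2 u1 u2 :: real
  assumes pos: "0 < l1" "0 < l2" "0 < u1" "0 < u2" "0 \<le> k1" "0 \<le> k2"
begin

lemma S_Sigma: "bo_states N1 N2 = Sigma {..N1+N2} (\<lambda>a. {..N1+N2-a})"
  by (auto simp: bo_states_def)

lemma sum_S1: "(\<Sum>x\<in>bo_states N1 N2. f x) = (\<Sum>a\<le>N1+N2. \<Sum>b\<le>N1+N2-a. f (a,b))"
  unfolding S_Sigma by (subst sum.Sigma) auto

lemma sum_S2: "(\<Sum>x\<in>bo_states N1 N2. f x) = (\<Sum>b\<le>N1+N2. \<Sum>a\<le>N1+N2-b. f (a,b))"
proof -
  have "bo_states N1 N2 = prod.swap ` (Sigma {..N1+N2} (\<lambda>b. {..N1+N2-b}))"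
    by (auto simp: bo_states_def image_iff)
  then have "(\<Sum>x\<in>bo_states N1 N2. f x) = (\<Sum>y\<in>Sigma {..N1+N2} (\<lambda>b. {..N1+N2-b}). f (prod.swap y))"
    by (simp add: sum.reindex)
  also have "\<dots> = (\<Sum>(b,a)\<in>Sigma {..N1+N2} (\<lambda>b. {..N1+N2-b}). f (a,b))"
    by (rule sum.cong) auto
  also have "\<dots> = (\<Sum>b\<le>N1+N2. \<Sum>a\<le>N1+N2-b. f (a,b))" by (subst sum.Sigma) auto
  finally show ?thesis .
qed


lemma Zs_formula1: "Zs N1 N2 k1 k2 l1 l2 u1 u2 = (\<Sum>a\<le>N1+N2. rho (l1/u1) k2 N1 a * (\<Sum>b\<le>N1+N2-a. rho (l2/u2) k1 N2 b))"
  unfolding Zs_def[OF pos] sum_S1 sum_distrib_left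
  by (intro sum.cong refl) (auto simp: wt_def)

lemma Zs_formula2: "Zs N1 N2 k1 k2 l1 l2 u1 u2 = (\<Sum>b\<le>N1+N2. rho (l2/u2) k1 N2 b * (\<Sum>a\<le>N1+N2-b. rho (l1/u1) k2 N1 a))"
  unfolding Zs_def[OF pos] sum_S2 sum_distrib_left
  by (intro sum.cong refl) (auto simp: wt_def)

lemma Num1_formula:
  "(\<Sum>x\<in>bo_states N1 N2. wt N1 N2 k1 k2 (l1/u1) (l2/u2) x * (1 - bo_adm1 N1 N2 k1 k2 x))
   = (\<Sum>a\<le>N1+N2. rho (l1/u1) k2 N1 a * (rho (l2/u2) k1 N2 (N1+N2-a) + (1 - acut k2 N1 a) * (\<Sum>b<N1+N2-a. rho (l2/u2) k1 N2 b)))"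
  unfolding sum_S1
proof (rule sum.cong[OF refl])
  fix a assume a: "a \<in> {..N1+N2}"
  define c where "c = N1 + N2 - a"
  have "(\<Sum>b\<le>N1+N2-a. wt N1 N2 k1 k2 (l1/u1) (l2/u2) (a,b) * (1 - bo_adm1 N1 N2 k1 k2 (a,b)))
      = (\<Sum>b<Suc c. wt N1 N2 k1 k2 (l1/u1) (l2/u2) (a,b) * (1 - bo_adm1 N1 N2 k1 k2 (a,b)))"
    by (simp add: c_def lessThan_Suc_atMost)
  also have "\<dots> = (\<Sum>b<c. wt N1 N2 k1 k2 (l1/u1) (l2/u2) (a,b) * (1 - bo_adm1 N1 N2 k1 k2 (a,b)))
      + wt N1 N2 k1 k2 (l1/u1) (l2/u2) (a,c) * (1 - bo_adm1 N1 N2 k1 k2 (a,c))"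
    by (rule sum.lessThan_Suc)
  also have "(\<Sum>b<c. wt N1 N2 k1 k2 (l1/u1) (l2/u2) (a,b) * (1 - bo_adm1 N1 N2 k1 k2 (a,b)))
      = (\<Sum>b<c. rho (l1/u1) k2 N1 a * (1 - acut k2 N1 a) * rho (l2/u2) k1 N2 b)"
    by (rule sum.cong[OF refl]) (use a in \<open>auto simp: c_def wt_def adm1_acut\<close>)
  also have "wt N1 N2 k1 k2 (l1/u1) (l2/u2) (a,c) * (1 - bo_adm1 N1 N2 k1 k2 (a,c)) = rho (l1/u1) k2 N1 a * rho (l2/u2) k1 N2 c"
    using a by (simp add: c_def wt_def adm1_acut)
  finally show "(\<Sum>b\<le>N1+N2-a. wt N1 N2 k1 k2 (l1/u1) (l2/u2) (a,b) * (1 - bo_adm1 N1 N2 k1 k2 (a,b)))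
      = rho (l1/u1) k2 N1 a * (rho (l2/u2) k1 N2 (N1+N2-a) + (1 - acut k2 N1 a) * (\<Sum>b<N1+N2-a. rho (l2/u2) k1 N2 b))"
    by (simp add: c_def sum_distrib_left algebra_simps)
qed

lemma Num2_formula:
  "(\<Sum>x\<in>bo_states N1 N2. wt N1 N2 k1 k2 (l1/u1) (l2/u2) x * (1 - bo_adm2 N1 N2 k1 k2 x))
   = (\<Sum>b\<le>N1+N2. rho (l2/u2) k1 N2 b * (rho (l1/u1) k2 N1 (N1+N2-b) + (1 - acut k1 N2 b) * (\<Sum>a<N1+N2-b. rho (l1/u1) k2 N1 a)))"
  unfolding sum_S2
proof (rule sum.cong[OF refl])
  fix b assume b: "b \<in> {..N1+N2}"
  define c where "c = N1 + N2 - b"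
  have "(\<Sum>a\<le>N1+N2-b. wt N1 N2 k1 k2 (l1/u1) (l2/u2) (a,b) * (1 - bo_adm2 N1 N2 k1 k2 (a,b)))
      = (\<Sum>a<Suc c. wt N1 N2 k1 k2 (l1/u1) (l2/u2) (a,b) * (1 - bo_adm2 N1 N2 k1 k2 (a,b)))"
    by (simp add: c_def lessThan_Suc_atMost)
  also have "\<dots> = (\<Sum>a<c. wt N1 N2 k1 k2 (l1/u1) (l2/u2) (a,b) * (1 - bo_adm2 N1 N2 k1 k2 (a,b)))
      + wt N1 N2 k1 k2 (l1/u1) (l2/u2) (c,b) * (1 - bo_adm2 N1 N2 k1 k2 (c,b))"
    by (rule sum.lessThan_Suc)
  also have "(\<Sum>a<c. wt N1 N2 k1 k2 (l1/u1) (l2/u2) (a,b) * (1 - bo_adm2 N1 N2 k1 k2 (a,b)))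
      = (\<Sum>a<c. rho (l2/u2) k1 N2 b * (1 - acut k1 N2 b) * rho (l1/u1) k2 N1 a)"
    by (rule sum.cong[OF refl]) (use b in \<open>auto simp: c_def wt_def adm2_acut\<close>)
  also have "wt N1 N2 k1 k2 (l1/u1) (l2/u2) (c,b) * (1 - bo_adm2 N1 N2 k1 k2 (c,b)) = rho (l2/u2) k1 N2 b * rho (l1/u1) k2 N1 c"
    using b by (simp add: c_def wt_def adm2_acut)
  finally show "(\<Sum>a\<le>N1+N2-b. wt N1 N2 k1 k2 (l1/u1) (l2/u2) (a,b) * (1 - bo_adm2 N1 N2 k1 k2 (a,b)))
      = rho (l2/u2) k1 N2 b * (rho (l1/u1) k2 N1 (N1+N2-b) + (1 - acut k1 N2 b) * (\<Sum>a<N1+N2-b. rho (l1/u1) k2 N1 a))"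
    by (simp add: c_def sum_distrib_left algebra_simps)
qed

lemma B1_formula: "B1_bo N1 N2 k1 k2 l1 l2 u1 u2 =
   (\<Sum>a\<le>N1+N2. rho (l1/u1) k2 N1 a * (rho (l2/u2) k1 N2 (N1+N2-a) + (1 - acut k2 N1 a) * (\<Sum>b<N1+N2-a. rho (l2/u2) k1 N2 b)))
   / (\<Sum>a\<le>N1+N2. rho (l1/u1) k2 N1 a * (\<Sum>b\<le>N1+N2-a. rho (l2/u2) k1 N2 b))"
  unfolding B1_bo_def bo_pi_eq[OF pos] Num1_formula[symmetric] Zs_formula1[symmetric]
  by (simp add: sum_divide_distrib)

lemma B2_formula: "B2_bo N1 N2 k1 k2 l1 l2 u1 u2 =
   (\<Sum>b\<le>N1+N2. rho (l2/u2) k1 N2 b * (rho (l1/u1) k2 N1 (N1+N2-b) + (1 - acut k1 N2 b) * (\<Sum>a<N1+N2-b. rho (l1/u1) k2 N1 a)))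
   / (\<Sum>b\<le>N1+N2. rho (l2/u2) k1 N2 b * (\<Sum>a\<le>N1+N2-b. rho (l1/u1) k2 N1 a))"
  unfolding B2_bo_def bo_pi_eq[OF pos] Num2_formula[symmetric] Zs_formula2[symmetric]
  by (simp add: sum_divide_distrib)

end

lemma integrable_exp_half_pos: "integrable lborel (\<lambda>x::real. indicator {0..} x * exp (- (1/2) * x))"
proof -
  have "integrable lebesgue (\<lambda>x::real. indicator {0..} x *\<^sub>R exp (- (1/2) * x))"
    by (intro nonnegative_absolutely_integrable_1 [unfolded set_integrable_def] integrable_on_exp_minus_to_infinity) auto
  then have "integrable (completion lborel) (\<lambda>x::real. indicator {0..} x * exp (- (1/2) * x))" by simp
  then show ?thesis by (subst (asm) integrable_completion) auto
qed

lemma integrable_exp_abs: "integrable lborel (\<lambda>x::real. exp (- \<bar>x\<bar> / 2))"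
proof -
  have i1: "integrable lborel (\<lambda>x::real. indicator {0..} x * exp (- (1/2) * x))" by (rule integrable_exp_half_pos)
  have i2: "integrable lborel (\<lambda>x::real. indicator {0..} (-x) * exp (- (1/2) * (-x)))"
    using i1 lborel_integrable_real_affine_iff[of "-1" "\<lambda>x. indicator {0..} x * exp (- (1/2) * x)" 0] by simp
  show ?thesis
  proof (rule Bochner_Integration.integrable_bound[OF Bochner_Integration.integrable_add[OF i1 i2]])
    show "(\<lambda>x::real. exp (- \<bar>x\<bar> / 2)) \<in> borel_measurable lborel" by measurable
    show "AE x in lborel. norm (exp (- \<bar>x::real\<bar> / 2)) \<le> norm (indicator {0..} x * exp (- (1/2) * x) + indicator {0..} (-x) * exp (- (1/2) * (-x)))"
      by (rule AE_I2) (auto simp: indicator_def abs_if add_nonneg_pos add_pos_nonneg)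
  qed
qed

lemma indicator_unit_iff: "indicator {real n..<real n + 1} y = (if 0 \<le> y \<and> nat \<lfloor>y\<rfloor> = n then 1 else (0::real))"
proof -
  have "(real n \<le> y \<and> y < real n + 1) \<longleftrightarrow> (0 \<le> y \<and> nat \<lfloor>y\<rfloor> = n)"
  proof
    assume h: "real n \<le> y \<and> y < real n + 1"
    then have "\<lfloor>y\<rfloor> = int n" by (intro floor_unique) auto
    then show "0 \<le> y \<and> nat \<lfloor>y\<rfloor> = n" using h by auto
  next
    assume h: "0 \<le> y \<and> nat \<lfloor>y\<rfloor> = n"
    then have "\<lfloor>y\<rfloor> = int n" by auto
    then show "real n \<le> y \<and> y < real n + 1" by linarith
  qed
  then show ?thesis by (auto simp: indicator_def)
qed

lemma step_sum:
  "(\<Sum>n\<le>L. c n * indicator {real n..<real n + 1} y) = (if 0 \<le> y \<and> nat \<lfloor>y\<rfloor> \<le> L then c (nat \<lfloor>y\<rfloor>) else (0::real))"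
proof -
  have "(\<Sum>n\<le>L. c n * indicator {real n..<real n + 1} y) = (\<Sum>n\<le>L. if n = nat \<lfloor>y\<rfloor> then (if 0 \<le> y then c n else 0) else 0)"
    by (rule sum.cong) (auto simp: indicator_unit_iff)
  also have "\<dots> = (if 0 \<le> y \<and> nat \<lfloor>y\<rfloor> \<le> L then c (nat \<lfloor>y\<rfloor>) else 0)"
    using sum.delta[of "{..L}" "nat \<lfloor>y\<rfloor>" "\<lambda>n. if 0 \<le> y then c n else 0"] by auto
  finally show ?thesis .
qed

lemma sum_as_integral:
  fixes c :: "nat \<Rightarrow> real" and s C :: real
  assumes s: "0 < s"
  shows "(\<Sum>n\<le>L. c n) / s = (LINT t|lborel. (\<Sum>n\<le>L. c n * indicator {real n..<real n + 1} (C + s * t)))"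
proof -
  have int: "integrable lborel (\<lambda>y. c n * indicator {real n..<real n + 1} y)" for n
    by (intro integrable_mult_right integrable_real_indicator) auto
  have "(LINT y|lborel. (\<Sum>n\<le>L. c n * indicator {real n..<real n + 1} y)) = (\<Sum>n\<le>L. c n)"
  proof -
    have "(LINT y|lborel. (\<Sum>n\<le>L. c n * indicator {real n..<real n + 1} y)) = (\<Sum>n\<le>L. LINT y|lborel. c n * indicator {real n..<real n + 1} y)"
      by (rule Bochner_Integration.integral_sum) (use int in auto)
    also have "\<dots> = (\<Sum>n\<le>L. c n)"
    proof (rule sum.cong[OF refl])
      fix n
      have "(LINT y|lborel. c n * indicator {real n..<real n + 1} y) = c n * (LINT y|lborel. indicator {real n..<real n + 1} y)"
        by (rule integral_mult_right_zero)
      also have "(LINT y|lborel. indicator {real n..<real n + 1} y) = (1::real)"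
        by simp
      finally show "(LINT y|lborel. c n * indicator {real n..<real n + 1} y) = c n" by simp
    qed
    finally show ?thesis .
  qed
  moreover have "(LINT y|lborel. (\<Sum>n\<le>L. c n * indicator {real n..<real n + 1} y))
      = s * (LINT t|lborel. (\<Sum>n\<le>L. c n * indicator {real n..<real n + 1} (C + s * t)))"
    using lborel_integral_real_affine[of s "\<lambda>y. (\<Sum>n\<le>L. c n * indicator {real n..<real n + 1} y)" C] s
    by simp
  ultimately show ?thesis using s by (simp add: field_simps)
qed


lemma sum_limit:
  fixes h :: "nat \<Rightarrow> nat \<Rightarrow> real" and s C :: "nat \<Rightarrow> real" and L :: "nat \<Rightarrow> nat"
    and H :: "real \<Rightarrow> real" and D :: real and E :: "real set"
  assumes s: "filterlim s at_top sequentially" "\<And>m. 0 < s m"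
    and C: "filterlim (\<lambda>m. C m / s m) at_top sequentially"
    and supp: "\<And>m n. L m < n \<Longrightarrow> h m n = 0"
    and bound: "eventually (\<lambda>m. \<forall>n. \<bar>h m n\<bar> \<le> D * exp (- \<bar>real n - C m\<bar> / (2 * s m))) sequentially"
    and lim: "\<And>t. t \<notin> E \<Longrightarrow> (\<lambda>m. h m (nat \<lfloor>C m + s m * t\<rfloor>)) \<longlonglongrightarrow> H t"
    and E: "finite E"
    and H: "H \<in> borel_measurable lborel"
  shows "(\<lambda>m. (\<Sum>n\<le>L m. h m n) / s m) \<longlonglongrightarrow> (LINT t|lborel. H t)"
proof -
  define f where "f m t = (\<Sum>n\<le>L m. h m n * indicator {real n..<real n + 1} (C m + s m * t))" for m t
  have eq: "(\<Sum>n\<le>L m. h m n) / s m = (LINT t|lborel. f m t)" for m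
    unfolding f_def by (rule sum_as_integral[OF s(2)])
  have fstep: "f m t = (if 0 \<le> C m + s m * t then h m (nat \<lfloor>C m + s m * t\<rfloor>) else 0)" for m t
    unfolding f_def step_sum using supp[of m "nat \<lfloor>C m + s m * t\<rfloor>"] by auto
  have fmeas: "f m \<in> borel_measurable lborel" for m
    unfolding f_def by measurable
  obtain m0 where m0: "\<And>m. m \<ge> m0 \<Longrightarrow> (\<forall>n. \<bar>h m n\<bar> \<le> D * exp (- \<bar>real n - C m\<bar> / (2 * s m))) \<and> 1 \<le> s m"
    using eventually_conj[OF bound filterlim_at_top_dense[THEN iffD1, OF s(1), rule_format, of 1]]
    unfolding eventually_sequentially by (auto intro: less_imp_le)
  define w where "w t = \<bar>D\<bar> * exp (1/2) * exp (- \<bar>t\<bar> / 2)" for t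
  have wint: "integrable lborel w" unfolding w_def
    by (intro integrable_mult_right integrable_exp_abs)
  have fbound: "\<bar>f m t\<bar> \<le> w t" if m: "m \<ge> m0" for m t
  proof (cases "0 \<le> C m + s m * t")
    case True
    define n where "n = nat \<lfloor>C m + s m * t\<rfloor>"
    have n1: "real n \<le> C m + s m * t" "C m + s m * t < real n + 1" using True unfolding n_def by linarith+
    have s1: "1 \<le> s m" using m0[OF m] by simp
    have "\<bar>real n - C m\<bar> \<ge> s m * \<bar>t\<bar> - 1" using n1 s1 by (auto simp: abs_if split: if_splits)
    then have "- \<bar>real n - C m\<bar> / (2 * s m) \<le> - (s m * \<bar>t\<bar> - 1) / (2 * s m)"
      using s1 by (intro divide_right_mono) auto
    also have "\<dots> = - \<bar>t\<bar> / 2 + 1 / (2 * s m)" using s1 by (simp add: field_simps)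
    also have "\<dots> \<le> - \<bar>t\<bar> / 2 + 1/2" using s1 by (simp add: field_simps)
    finally have ex: "exp (- \<bar>real n - C m\<bar> / (2 * s m)) \<le> exp (1/2) * exp (- \<bar>t\<bar> / 2)"
      by (simp add: exp_add[symmetric])
    have "\<bar>f m t\<bar> = \<bar>h m n\<bar>" using True by (simp add: fstep n_def)
    also have "\<dots> \<le> D * exp (- \<bar>real n - C m\<bar> / (2 * s m))" using m0[OF m] by blast
    also have "\<dots> \<le> \<bar>D\<bar> * (exp (1/2) * exp (- \<bar>t\<bar> / 2))"
      using ex by (intro order_trans[OF _ mult_left_mono[OF ex]]) auto
    finally show ?thesis by (simp add: w_def ac_simps)
  next
    case False
    then show ?thesis by (simp add: fstep w_def)
  qed
  have flim: "(\<lambda>m. f m t) \<longlonglongrightarrow> H t" if t: "t \<notin> E" for t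
  proof -
    have ev: "eventually (\<lambda>m. - t \<le> C m / s m) sequentially"
      using C by (simp add: filterlim_at_top)
    have "eventually (\<lambda>m. h m (nat \<lfloor>C m + s m * t\<rfloor>) = f m t) sequentially"
      using ev
    proof eventually_elim
      case (elim m)
      then have "0 \<le> C m + s m * t" using s(2)[of m] by (simp add: field_simps)
      then show ?case by (simp add: fstep)
    qed
    then show ?thesis by (rule Lim_transform_eventually[OF lim[OF t]])
  qed
  have AE: "AE t in lborel. t \<notin> E"
    using finite_imp_null_set_lborel[OF E] by (rule AE_not_in)
  have "(\<lambda>m. LINT t|lborel. f (m + m0) t) \<longlonglongrightarrow> (LINT t|lborel. H t)"
  proof (rule integral_dominated_convergence[OF H _ wint])
    show "\<And>i. f (i + m0) \<in> borel_measurable lborel" by (rule fmeas)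
    show "AE x in lborel. (\<lambda>i. f (i + m0) x) \<longlonglongrightarrow> H x"
      using AE by eventually_elim (rule LIMSEQ_ignore_initial_segment[OF flim])
    show "\<And>i. AE x in lborel. norm (f (i + m0) x) \<le> w x"
      using fbound by auto
  qed
  then have "(\<lambda>m. LINT t|lborel. f m t) \<longlonglongrightarrow> (LINT t|lborel. H t)"
    by (rule LIMSEQ_offset)
  then show ?thesis unfolding eq .
qed

definition Lu :: "real \<Rightarrow> nat \<Rightarrow> real" where
  "Lu a n = real n * ln a - ln (fact n)"

lemma Lu_Suc: "Lu a (Suc n) = Lu a n + ln a - ln (real (Suc n))"
proof -
  have "ln (fact (Suc n) :: real) = ln (real (Suc n)) + ln (fact n)"
    by (simp add: ln_mult del: of_nat_Suc)
  then show ?thesis unfolding Lu_def by (simp add: algebra_simps)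
qed

lemma exp_Lu: "0 < a \<Longrightarrow> exp (Lu a n) = a ^ n / fact n"
  unfolding Lu_def by (simp add: exp_diff exp_of_nat_mult)

definition mainf :: "real \<Rightarrow> real \<Rightarrow> real \<Rightarrow> real" where
  "mainf a M j = j * ln (a / M) - (j\<^sup>2 + j) / (2 * M)"

definition Dev :: "real \<Rightarrow> nat \<Rightarrow> nat \<Rightarrow> real" where
  "Dev a M n = Lu a n - Lu a M - mainf a M (real n - real M)"

lemma Dev_step:
  assumes "0 < a" "0 < M"
  shows "Dev a M (Suc n) - Dev a M n = - (ln (1 + (real (Suc n) - real M) / real M) - (real (Suc n) - real M) / real M)"
proof -
  have M: "real M > 0" using assms by simp
  have e1: "1 + (real (Suc n) - real M) / real M = real (Suc n) / real M" using M by (simp add: field_simps)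
  have e2: "ln (real (Suc n) / real M) = ln (real (Suc n)) - ln (real M)" using M by (simp add: ln_div del: of_nat_Suc)
  have e3: "ln (a / real M) = ln a - ln (real M)" using M assms by (simp add: ln_div)
  show ?thesis unfolding Dev_def Lu_Suc mainf_def e1 e2 e3 using M
    by (simp add: field_simps power2_eq_square)
qed

lemma Dev_N: "Dev a M M = 0"
  by (simp add: Dev_def mainf_def)

lemma Dev_up:
  assumes "0 < a" "0 < M"
  shows "2 * (real k + 1) \<le> real M \<Longrightarrow> \<bar>Dev a M (M + k)\<bar> \<le> 2 * real k * ((real k + 1) / real M)\<^sup>2"
proof (induction k)
  case 0 then show ?case by (simp add: Dev_N)
next
  case (Suc k)
  have M: "real M > 0" using assms by simp
  define y where "y = (real (Suc (M + k)) - real M) / real M"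
  have y: "y = (real k + 1) / real M" unfolding y_def by simp
  have yb: "\<bar>y\<bar> \<le> 1/2" using Suc.prems M unfolding y by (simp add: field_simps)
  have st: "\<bar>Dev a M (Suc (M + k)) - Dev a M (M + k)\<bar> \<le> 2 * y\<^sup>2"
    using Dev_step[OF assms, of "M + k"] abs_ln_one_plus_x_minus_x_bound[OF yb] unfolding y_def by simp
  have IH: "\<bar>Dev a M (M + k)\<bar> \<le> 2 * real k * ((real k + 1) / real M)\<^sup>2" using Suc by simp
  have "\<bar>Dev a M (M + Suc k)\<bar> \<le> 2 * real k * ((real k + 1) / real M)\<^sup>2 + 2 * ((real k + 1) / real M)\<^sup>2"
    using st IH unfolding y by simp
  also have "\<dots> = 2 * (real k + 1) * ((real k + 1) / real M)\<^sup>2" by (simp add: algebra_simps)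
  also have "\<dots> \<le> 2 * (real k + 1) * ((real k + 2) / real M)\<^sup>2"
    using M by (intro mult_left_mono power_mono divide_right_mono) auto
  finally show ?case by (simp add: add.commute)
qed

lemma Dev_down:
  assumes "0 < a" "0 < M"
  shows "k \<le> M \<Longrightarrow> 2 * (real k + 1) \<le> real M \<Longrightarrow> \<bar>Dev a M (M - k)\<bar> \<le> 2 * real k * ((real k + 1) / real M)\<^sup>2"
proof (induction k)
  case 0 then show ?case by (simp add: Dev_N)
next
  case (Suc k)
  have M: "real M > 0" using assms by simp
  define n where "n = M - Suc k"
  have nS: "Suc n = M - k" using Suc.prems unfolding n_def by simp
  define y where "y = (real (Suc n) - real M) / real M"
  have y: "y = - real k / real M" unfolding y_def nS using Suc.prems by (simp add: of_nat_diff)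
  have yb: "\<bar>y\<bar> \<le> 1/2" using Suc.prems M unfolding y by (simp add: field_simps)
  have st: "\<bar>Dev a M (Suc n) - Dev a M n\<bar> \<le> 2 * y\<^sup>2"
    using Dev_step[OF assms, of n] abs_ln_one_plus_x_minus_x_bound[OF yb] unfolding y_def by simp
  have IH: "\<bar>Dev a M (M - k)\<bar> \<le> 2 * real k * ((real k + 1) / real M)\<^sup>2" using Suc by simp
  have "\<bar>Dev a M n\<bar> \<le> 2 * real k * ((real k + 1) / real M)\<^sup>2 + 2 * ((real k + 1) / real M)\<^sup>2"
  proof -
    have "y\<^sup>2 \<le> ((real k + 1) / real M)\<^sup>2" unfolding y using M
      by (simp add: power_divide divide_right_mono power_mono)
    then show ?thesis using st IH nS by simp
  qed
  also have "\<dots> = 2 * (real k + 1) * ((real k + 1) / real M)\<^sup>2" by (simp add: algebra_simps)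
  also have "\<dots> \<le> 2 * (real k + 1) * ((real k + 2) / real M)\<^sup>2"
    using M by (intro mult_left_mono power_mono divide_right_mono) auto
  finally show ?case by (simp add: n_def add.commute)
qed

lemma Dev_bound:
  assumes "0 < a" "0 < M" "2 * (\<bar>real n - real M\<bar> + 1) \<le> real M"
  shows "\<bar>Dev a M n\<bar> \<le> 2 * \<bar>real n - real M\<bar> * ((\<bar>real n - real M\<bar> + 1) / real M)\<^sup>2"
proof (cases "M \<le> n")
  case True
  define k where "k = n - M"
  have n: "n = M + k" using True by (simp add: k_def)
  have "\<bar>real n - real M\<bar> = real k" using n by simp
  then show ?thesis using Dev_up[OF assms(1,2), of k] assms(3) n by simp
next
  case False
  define k where "k = M - n"
  have n: "n = M - k" "k \<le> M" using False by (simp_all add: k_def)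
  have "\<bar>real n - real M\<bar> = real k" using False by (simp add: k_def of_nat_diff)
  then show ?thesis using Dev_down[OF assms(1,2), of k] assms(3) n by simp
qed


locale player =
  fixes N :: "nat \<Rightarrow> nat" and a :: "nat \<Rightarrow> real" and \<beta> :: real
  assumes Npos: "\<And>m. 0 < N m" and apos: "\<And>m. 0 < a m"
    and slim: "filterlim (\<lambda>m. sqrt (real (N m))) at_top sequentially"
    and alim: "(\<lambda>m. (a m - real (N m)) / sqrt (real (N m))) \<longlonglongrightarrow> \<beta>"
begin

lemma s_pos: "0 < sqrt (real (N m))" using Npos by simp

lemma s_sq: "sqrt (real (N m)) * sqrt (real (N m)) = real (N m)" by simp

lemma inv_s_0: "(\<lambda>m. 1 / sqrt (real (N m))) \<longlonglongrightarrow> 0"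
  using tendsto_inverse_0_at_top[OF slim] by (simp add: divide_inverse)

lemma s_ln: "(\<lambda>m. sqrt (real (N m)) * ln (a m / real (N m))) \<longlonglongrightarrow> \<beta>"
proof -
  define s where "s m = sqrt (real (N m))" for m
  define b where "b m = (a m - real (N m)) / s m" for m
  define x where "x m = b m / s m" for m
  have sp: "0 < s m" for m using s_pos by (simp add: s_def)
  have ss: "s m * s m = real (N m)" for m by (simp add: s_def)
  have "b = (\<lambda>m. (a m - real (N m)) / sqrt (real (N m)))" by (simp add: fun_eq_iff b_def s_def)
  then have b: "b \<longlonglongrightarrow> \<beta>" using alim by simp
  have is0: "(\<lambda>m. 1 / s m) \<longlonglongrightarrow> 0" using inv_s_0 by (simp add: s_def)
  have x0: "x \<longlonglongrightarrow> 0" unfolding x_def using tendsto_mult[OF b is0] by simp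
  have ax: "a m / real (N m) = 1 + x m" for m
    using sp[of m] ss[of m] Npos[of m] by (simp add: x_def b_def field_simps)
  have sx: "s m * x m = b m" for m using sp[of m] by (simp add: x_def)
  have dec: "s m * ln (a m / real (N m)) = b m + s m * (ln (1 + x m) - x m)" for m
    unfolding ax using sx[of m] by (simp add: algebra_simps)
  have ev: "eventually (\<lambda>m. \<bar>x m\<bar> \<le> 1/2) sequentially"
  proof -
    have "(\<lambda>m. \<bar>x m\<bar>) \<longlonglongrightarrow> 0" using tendsto_rabs[OF x0] by simp
    then have "eventually (\<lambda>m. \<bar>x m\<bar> < 1/2) sequentially" by (rule order_tendstoD) simp
    then show ?thesis by (rule eventually_mono) simp
  qed
  have r0: "(\<lambda>m. s m * (ln (1 + x m) - x m)) \<longlonglongrightarrow> 0"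
  proof (rule Lim_null_comparison)
    show "eventually (\<lambda>m. norm (s m * (ln (1 + x m) - x m)) \<le> 2 * (b m)\<^sup>2 * (1 / s m)) sequentially"
      using ev
    proof eventually_elim
      case (elim m)
      have "norm (s m * (ln (1 + x m) - x m)) = s m * \<bar>ln (1 + x m) - x m\<bar>"
        using sp[of m] by (simp add: abs_mult)
      also have "\<dots> \<le> s m * (2 * (x m)\<^sup>2)"
        using abs_ln_one_plus_x_minus_x_bound[OF elim] sp[of m] by (intro mult_left_mono) auto
      also have "\<dots> = 2 * (b m)\<^sup>2 * (1 / s m)"
        using sp[of m] by (simp add: x_def power2_eq_square field_simps)
      finally show ?case .
    qed
    show "(\<lambda>m. 2 * (b m)\<^sup>2 * (1 / s m)) \<longlonglongrightarrow> 0"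
      using tendsto_mult[OF tendsto_mult[OF tendsto_const tendsto_power[OF b]] is0] by simp
  qed
  show ?thesis unfolding dec[unfolded s_def] using tendsto_add[OF b r0] by (simp add: s_def)
qed

lemma local_limit:
  fixes n :: "nat \<Rightarrow> nat"
  assumes nl: "(\<lambda>m. (real (n m) - real (N m)) / sqrt (real (N m))) \<longlonglongrightarrow> t"
  shows "(\<lambda>m. exp (Lu (a m) (n m) - Lu (a m) (N m))) \<longlonglongrightarrow> exp (\<beta> * t - t\<^sup>2 / 2)"
proof -
  define s where "s m = sqrt (real (N m))" for m
  define J where "J m = (real (n m) - real (N m)) / s m" for m
  have sp: "0 < s m" for m using s_pos by (simp add: s_def)
  have ss: "s m * s m = real (N m)" for m by (simp add: s_def)
  have "J = (\<lambda>m. (real (n m) - real (N m)) / sqrt (real (N m)))" by (simp add: fun_eq_iff J_def s_def)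
  then have Jt: "J \<longlonglongrightarrow> t" using nl by simp
  have is0: "(\<lambda>m. 1 / s m) \<longlonglongrightarrow> 0" using inv_s_0 by (simp add: s_def)
  have sl: "(\<lambda>m. s m * ln (a m / real (N m))) \<longlonglongrightarrow> \<beta>" using s_ln by (simp add: s_def)
  have nJ: "real (n m) - real (N m) = J m * s m" for m using sp[of m] by (simp add: J_def)
  have mf: "mainf (a m) (real (N m)) (real (n m) - real (N m)) = J m * (s m * ln (a m / real (N m))) - ((J m)\<^sup>2 + J m * (1 / s m)) / 2" for m
  proof -
    have "(J m * s m)\<^sup>2 / (2 * real (N m)) = (J m)\<^sup>2 / 2" unfolding ss[symmetric] using sp[of m]
      by (simp add: power2_eq_square)
    moreover have "J m * s m / (2 * real (N m)) = J m * (1 / s m) / 2" unfolding ss[symmetric] using sp[of m]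
      by simp
    ultimately show ?thesis unfolding mainf_def nJ by (simp add: add_divide_distrib ac_simps)
  qed
  have mfl: "(\<lambda>m. mainf (a m) (real (N m)) (real (n m) - real (N m))) \<longlonglongrightarrow> t * \<beta> - (t\<^sup>2 + t * 0) / 2"
    unfolding mf by (intro tendsto_intros Jt sl is0) simp
  have Q: "(\<lambda>m. \<bar>J m\<bar> + 1 / s m) \<longlonglongrightarrow> \<bar>t\<bar> + 0" by (intro tendsto_intros Jt is0)
  have ev: "eventually (\<lambda>m. 2 * (\<bar>real (n m) - real (N m)\<bar> + 1) \<le> real (N m)) sequentially"
  proof -
    have "(\<lambda>m. (\<bar>J m\<bar> + 1 / s m) * (1 / s m)) \<longlonglongrightarrow> (\<bar>t\<bar> + 0) * 0" by (intro tendsto_mult Q is0)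
    then have "eventually (\<lambda>m. (\<bar>J m\<bar> + 1 / s m) * (1 / s m) < 1/2) sequentially"
      by (intro order_tendstoD) auto
    then show ?thesis
    proof eventually_elim
      case (elim m)
      define R where "R = (\<bar>J m\<bar> + 1 / s m) * (1 / s m)"
      have X: "\<bar>real (n m) - real (N m)\<bar> + 1 = R * real (N m)"
      proof -
        have "R * real (N m) = R * (s m * s m)" by (simp add: ss)
        also have "\<dots> = \<bar>J m\<bar> * s m + 1" using sp[of m] unfolding R_def by (simp add: field_simps)
        also have "\<dots> = \<bar>real (n m) - real (N m)\<bar> + 1" unfolding nJ using sp[of m] by (simp add: abs_mult)
        finally show ?thesis by simp
      qed
      have "R * real (N m) \<le> 1/2 * real (N m)"
        using elim Npos[of m] unfolding R_def by (intro mult_right_mono) auto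
      then have "2 * (R * real (N m)) \<le> 2 * (1/2 * real (N m))" by (rule mult_left_mono) simp
      then show ?case unfolding X by simp
    qed
  qed
  have Dl: "(\<lambda>m. Dev (a m) (N m) (n m)) \<longlonglongrightarrow> 0"
  proof (rule Lim_null_comparison)
    show "eventually (\<lambda>m. norm (Dev (a m) (N m) (n m)) \<le> 2 * \<bar>J m\<bar> * (\<bar>J m\<bar> + 1 / s m)\<^sup>2 * (1 / s m)) sequentially"
      using ev
    proof eventually_elim
      case (elim m)
      have "norm (Dev (a m) (N m) (n m)) \<le> 2 * \<bar>real (n m) - real (N m)\<bar> * ((\<bar>real (n m) - real (N m)\<bar> + 1) / real (N m))\<^sup>2"
        using Dev_bound[OF apos Npos elim] by simp
      also have "\<dots> = 2 * \<bar>J m\<bar> * (\<bar>J m\<bar> + 1 / s m)\<^sup>2 * (1 / s m)"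
      proof -
        have e1: "\<bar>real (n m) - real (N m)\<bar> = \<bar>J m\<bar> * s m" unfolding nJ using sp[of m] by (simp add: abs_mult)
        have e2: "(\<bar>J m\<bar> * s m + 1) / real (N m) = (\<bar>J m\<bar> + 1 / s m) * (1 / s m)"
          unfolding ss[symmetric] using sp[of m] by (simp add: field_simps)
        have e3: "s m * ((1 / s m))\<^sup>2 = 1 / s m" using sp[of m] by (simp add: power2_eq_square)
        have "2 * \<bar>real (n m) - real (N m)\<bar> * ((\<bar>real (n m) - real (N m)\<bar> + 1) / real (N m))\<^sup>2
            = 2 * \<bar>J m\<bar> * (\<bar>J m\<bar> + 1 / s m)\<^sup>2 * (s m * (1 / s m)\<^sup>2)"
          unfolding e1 e2 by (simp only: power_mult_distrib mult_ac)
        then show ?thesis unfolding e3 .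
      qed
      finally show ?case .
    qed
    show "(\<lambda>m. 2 * \<bar>J m\<bar> * (\<bar>J m\<bar> + 1 / s m)\<^sup>2 * (1 / s m)) \<longlonglongrightarrow> 0"
      using tendsto_mult[OF tendsto_mult[OF tendsto_mult[OF tendsto_const[of 2] tendsto_rabs[OF Jt]] tendsto_power[OF Q, of 2]] is0]
      by simp
  qed
  have eq: "Lu (a m) (n m) - Lu (a m) (N m) = Dev (a m) (N m) (n m) + mainf (a m) (real (N m)) (real (n m) - real (N m))" for m
    by (simp add: Dev_def)
  have "(\<lambda>m. Lu (a m) (n m) - Lu (a m) (N m)) \<longlonglongrightarrow> 0 + (t * \<beta> - (t\<^sup>2 + t * 0) / 2)"
    unfolding eq by (rule tendsto_add[OF Dl mfl])
  then have "(\<lambda>m. exp (Lu (a m) (n m) - Lu (a m) (N m))) \<longlonglongrightarrow> exp (0 + (t * \<beta> - (t\<^sup>2 + t * 0) / 2))"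
    by (rule tendsto_exp)
  then show ?thesis by (simp add: mult.commute)
qed

end


lemma Lu_diff_Suc: "0 < a \<Longrightarrow> Lu a (Suc n) - Lu a n = ln (a / real (Suc n))"
  by (simp add: Lu_Suc ln_div del: of_nat_Suc)

lemma up_bound:
  fixes a B s :: real and M :: nat
  assumes M: "0 < M" and s: "s = sqrt (real M)" and B: "0 \<le> B" and aB: "\<bar>a - real M\<bar> \<le> B * s"
    and sB: "2 * B + 2 \<le> s"
  shows "Lu a (M + k) - Lu a M \<le> - real k / (2 * s) + (B + 1/2) * min (real k) ((B + 1) * s + 1) / s"
proof (induction k)
  case 0
  have "0 < s" using sB B by simp
  then have "0 \<le> (B + 1) * s + 1" using B by simp
  then show ?case by simp
next
  case (Suc k)
  have sp: "0 < s" using sB B by simp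
  have ss: "s * s = real M" using s by simp
  have apos: "0 < a"
  proof -
    have "B * s \<le> s * s / 2" using sB sp B by (simp add: field_simps)
    then show ?thesis using aB ss M by (simp add: abs_le_iff)
  qed
  define z where "z = a / real (Suc (M + k))"
  have den: "0 < real (Suc (M + k))" by simp
  have inc: "Lu a (M + Suc k) - Lu a (M + k) \<le> z - 1"
    using Lu_diff_Suc[OF apos, of "M + k"] ln_le_minus_one[of z] apos unfolding z_def by simp
  show ?case
  proof (cases "real k + 1 < (B + 1) * s")
    case True
    have "z - 1 \<le> B / s"
    proof -
      have "z - 1 = (a - real M - real k - 1) / real (Suc (M + k))" unfolding z_def using den by (simp add: field_simps)
      also have "\<dots> \<le> B / s"
      proof (cases "a - real M - real k - 1 \<le> 0")
        case True
        have "(a - real M - real k - 1) / real (Suc (M + k)) \<le> 0" using True den by (rule divide_nonpos_pos)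
        also have "0 \<le> B / s" using B sp by simp
        finally show ?thesis .
      next
        case False
        have "(a - real M - real k - 1) / real (Suc (M + k)) \<le> (B * s) / real (Suc (M + k))"
          using aB den by (intro divide_right_mono) auto
        also have "\<dots> \<le> (B * s) / (s * s)" using ss B sp M by (intro divide_left_mono) auto
        also have "\<dots> = B / s" using sp by simp
        finally show ?thesis .
      qed
      finally show ?thesis .
    qed
    moreover have "min (real (Suc k)) ((B + 1) * s + 1) = min (real k) ((B + 1) * s + 1) + 1" using True by simp
    ultimately have mm: "min (real (Suc k)) ((B + 1) * s + 1) = min (real k) ((B + 1) * s + 1) + 1" by simp
    define mk where "mk = min (real k) ((B + 1) * s + 1)"
    have id: "- real (Suc k) / (2 * s) + (B + 1/2) * (mk + 1) / s = - real k / (2 * s) + (B + 1/2) * mk / s + B / s"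
      using sp by (simp add: field_simps)
    have "Lu a (M + Suc k) - Lu a M \<le> B / s + (- real k / (2 * s) + (B + 1/2) * mk / s)"
      using Suc.IH inc \<open>z - 1 \<le> B / s\<close> unfolding mk_def by simp
    then show ?thesis unfolding mm mk_def[symmetric] id by simp
  next
    case False
    have z0: "z \<le> (real M + B * s) / (real M + (B + 1) * s)"
    proof -
      have "z \<le> (real M + B * s) / real (Suc (M + k))" unfolding z_def using aB den by (intro divide_right_mono) auto
      also have "\<dots> \<le> (real M + B * s) / (real M + (B + 1) * s)"
      proof (rule divide_left_mono)
        show "real M + (B + 1) * s \<le> real (Suc (M + k))" using False by simp
        show "0 \<le> real M + B * s" using B sp by simp
        have "0 < real M + (B + 1) * s" using M B sp by (simp add: add_pos_nonneg)
        then show "0 < real (Suc (M + k)) * (real M + (B + 1) * s)" by simp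
      qed
      finally show ?thesis .
    qed
    have dp: "0 < real M + (B + 1) * s" using M B sp by (simp add: add_pos_nonneg)
    have "(real M + B * s) / (real M + (B + 1) * s) - 1 = - s / (real M + (B + 1) * s)"
      using dp by (simp add: diff_divide_distrib[symmetric] divide_simps) (simp add: algebra_simps)
    also have "\<dots> \<le> - s / (2 * real M)"
    proof -
      have "(B + 1) * s \<le> s * s" using sB sp B by (intro mult_right_mono) auto
      then have "real M + (B + 1) * s \<le> 2 * real M" using ss by simp
      then have "s / (2 * real M) \<le> s / (real M + (B + 1) * s)" using sp dp
        by (intro divide_left_mono) (auto intro!: mult_pos_pos)
      then show ?thesis by simp
    qed
    also have "\<dots> = - 1 / (2 * s)" using ss sp M by (simp add: field_simps)
    finally have "z - 1 \<le> - 1 / (2 * s)" using z0 by simp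
    moreover have "min (real k) ((B + 1) * s + 1) \<le> min (real (Suc k)) ((B + 1) * s + 1)" by simp
    ultimately have mm: "min (real k) ((B + 1) * s + 1) \<le> min (real (Suc k)) ((B + 1) * s + 1)" by simp
    define mk where "mk = min (real k) ((B + 1) * s + 1)"
    define mk' where "mk' = min (real (Suc k)) ((B + 1) * s + 1)"
    have "(B + 1/2) * mk / s \<le> (B + 1/2) * mk' / s"
      using mm B sp unfolding mk_def mk'_def by (intro divide_right_mono mult_left_mono) auto
    moreover have id: "- real (Suc k) / (2 * s) = - real k / (2 * s) - 1 / (2 * s)"
      using sp by (simp add: field_simps)
    moreover have "Lu a (M + Suc k) - Lu a M \<le> - 1 / (2 * s) + (- real k / (2 * s) + (B + 1/2) * mk / s)"
      using Suc.IH inc \<open>z - 1 \<le> - 1 / (2 * s)\<close> unfolding mk_def by simp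
    ultimately show ?thesis unfolding mk'_def[symmetric] by linarith
  qed
qed


lemma down_bound:
  fixes a B s :: real and M :: nat
  assumes M: "0 < M" and s: "s = sqrt (real M)" and B: "0 \<le> B" and aB: "\<bar>a - real M\<bar> \<le> B * s"
    and sB: "2 * B + 2 \<le> s"
  shows "k \<le> M \<Longrightarrow> Lu a (M - k) - Lu a M \<le> - real k / (2 * s) + (2 * B + 1/2) * min (real k) ((B + 1) * s + 1) / s"
proof (induction k)
  case 0
  have "0 < s" using sB B by simp
  then have "0 \<le> (B + 1) * s + 1" using B by simp
  then show ?case by simp
next
  case (Suc k)
  have sp: "0 < s" using sB B by simp
  have ss: "s * s = real M" using s by simp
  have Bs: "B * s \<le> real M / 2"
  proof -
    have "2 * B * s \<le> s * s" by (rule mult_right_mono) (use sB sp in auto)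
    then show ?thesis using ss by simp
  qed
  have apos: "real M / 2 \<le> a" using aB Bs by (simp add: abs_le_iff)
  have ap: "0 < a" using apos M by simp
  have kM: "k < M" using Suc.prems by simp
  define n where "n = M - Suc k"
  have nS: "Suc n = M - k" using kM by (simp add: n_def)
  define z where "z = real (M - k) / a"
  have zp: "0 < z" using kM ap by (simp add: z_def)
  have dec: "Lu a (M - Suc k) - Lu a (M - k) \<le> z - 1"
  proof -
    have "Lu a (Suc n) - Lu a n = ln (a / real (Suc n))" by (rule Lu_diff_Suc[OF ap])
    then have "Lu a n - Lu a (Suc n) = ln z" unfolding z_def nS using ap kM by (simp add: ln_div)
    then show ?thesis using ln_le_minus_one[OF zp] nS by (simp add: n_def)
  qed
  have IH: "Lu a (M - k) - Lu a M \<le> - real k / (2 * s) + (2 * B + 1/2) * min (real k) ((B + 1) * s + 1) / s"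
    using Suc.IH Suc.prems by simp
  show ?case
  proof (cases "real k < (B + 1) * s")
    case True
    have zb: "z - 1 \<le> 2 * B / s"
    proof -
      have "z - 1 \<le> real M / a - 1" unfolding z_def using ap by (intro diff_right_mono divide_right_mono) auto
      also have "\<dots> = (real M - a) / a" using ap by (simp add: field_simps)
      also have "\<dots> \<le> 2 * B / s"
      proof (cases "real M - a \<le> 0")
        case True
        have "(real M - a) / a \<le> 0" using True ap by (rule divide_nonpos_pos)
        also have "0 \<le> 2 * B / s" using B sp by simp
        finally show ?thesis .
      next
        case False
        have "(real M - a) / a \<le> (B * s) / a" using aB ap by (intro divide_right_mono) auto
        also have "\<dots> \<le> (B * s) / (real M / 2)" using apos B sp M by (intro divide_left_mono) auto
        also have "\<dots> = 2 * B / s" using sp ss M by (simp add: field_simps)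
        finally show ?thesis .
      qed
      finally show ?thesis .
    qed
    have mm: "min (real (Suc k)) ((B + 1) * s + 1) = min (real k) ((B + 1) * s + 1) + 1" using True by simp
    define mk where "mk = min (real k) ((B + 1) * s + 1)"
    have id: "- real (Suc k) / (2 * s) + (2 * B + 1/2) * (mk + 1) / s = - real k / (2 * s) + (2 * B + 1/2) * mk / s + 2 * B / s"
      using sp by (simp add: field_simps)
    have "Lu a (M - Suc k) - Lu a M \<le> 2 * B / s + (- real k / (2 * s) + (2 * B + 1/2) * mk / s)"
      using IH dec zb unfolding mk_def by simp
    then show ?thesis unfolding mm mk_def[symmetric] id by simp
  next
    case False
    have zb: "z - 1 \<le> - 1 / (2 * s)"
    proof -
      have Mk: "real (M - k) \<le> real M - (B + 1) * s" using False kM by (simp add: of_nat_diff)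
      have p1: "0 < real M - B * s" using Bs M by simp
      have p2: "0 \<le> real M - (B + 1) * s" using Mk kM by simp
      have "z \<le> (real M - (B + 1) * s) / a" unfolding z_def using Mk ap by (intro divide_right_mono) auto
      also have "\<dots> \<le> (real M - (B + 1) * s) / (real M - B * s)"
        using p1 p2 aB ap by (intro divide_left_mono) (auto simp: abs_le_iff)
      also have "\<dots> = 1 - s / (real M - B * s)" using p1 by (simp add: field_simps)
      finally have "z - 1 \<le> - (s / (real M - B * s))" by simp
      also have "\<dots> \<le> - (s / real M)"
        using p1 sp B M by (simp add: divide_left_mono mult_nonneg_nonneg)
      also have "\<dots> = - 1 / s" using ss sp M by (simp add: field_simps)
      also have "\<dots> \<le> - 1 / (2 * s)" using sp by (simp add: field_simps)
      finally show ?thesis .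
    qed
    have mm: "min (real k) ((B + 1) * s + 1) \<le> min (real (Suc k)) ((B + 1) * s + 1)" by simp
    define mk where "mk = min (real k) ((B + 1) * s + 1)"
    define mk' where "mk' = min (real (Suc k)) ((B + 1) * s + 1)"
    have "(2 * B + 1/2) * mk / s \<le> (2 * B + 1/2) * mk' / s"
      using mm B sp unfolding mk_def mk'_def by (intro divide_right_mono mult_left_mono) auto
    moreover have id: "- real (Suc k) / (2 * s) = - real k / (2 * s) - 1 / (2 * s)"
      using sp by (simp add: field_simps)
    moreover have "Lu a (M - Suc k) - Lu a M \<le> - 1 / (2 * s) + (- real k / (2 * s) + (2 * B + 1/2) * mk / s)"
      using IH dec zb unfolding mk_def by simp
    ultimately show ?thesis unfolding mk'_def[symmetric] by linarith
  qed
qed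

lemma Lu_bound:
  fixes a B s :: real and M :: nat
  assumes M: "0 < M" and s: "s = sqrt (real M)" and B: "0 \<le> B" and aB: "\<bar>a - real M\<bar> \<le> B * s"
    and sB: "2 * B + 2 \<le> s"
  shows "Lu a n - Lu a M \<le> (2 * B + 1/2) * (B + 2) - \<bar>real n - real M\<bar> / (2 * s)"
proof -
  have sp: "0 < s" using sB B by simp
  have s1: "1 \<le> s" using sB B by simp
  have mb: "(c * min x ((B + 1) * s + 1)) / s \<le> c * (B + 2)" if "0 \<le> c" for c x :: real
  proof -
    have "c * min x ((B + 1) * s + 1) / s \<le> c * ((B + 1) * s + 1) / s"
      using that sp by (intro divide_right_mono mult_left_mono) auto
    also have "\<dots> = c * ((B + 1) + 1 / s)" using sp by (simp add: field_simps)
    also have "\<dots> \<le> c * (B + 2)" using that s1 by (intro mult_left_mono) (auto simp: field_simps)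
    finally show ?thesis .
  qed
  show ?thesis
  proof (cases "M \<le> n")
    case True
    define k where "k = n - M"
    have n: "n = M + k" using True by (simp add: k_def)
    have "Lu a n - Lu a M \<le> - real k / (2 * s) + (B + 1/2) * min (real k) ((B + 1) * s + 1) / s"
      unfolding n by (rule up_bound[OF M s B aB sB])
    also have "(B + 1/2) * min (real k) ((B + 1) * s + 1) / s \<le> (2 * B + 1/2) * (B + 2)"
    proof -
      have "(B + 1/2) * (B + 2) \<le> (2 * B + 1/2) * (B + 2)" using B by (intro mult_right_mono) auto
      then show ?thesis using order_trans[OF mb[of "B + 1/2" "real k"]] B by simp
    qed
    moreover have "real k = \<bar>real n - real M\<bar>" using n by simp
    ultimately show ?thesis by simp
  next
    case False
    define k where "k = M - n"
    have n: "n = M - k" "k \<le> M" using False by (simp_all add: k_def)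
    have "Lu a n - Lu a M \<le> - real k / (2 * s) + (2 * B + 1/2) * min (real k) ((B + 1) * s + 1) / s"
      unfolding n by (rule down_bound[OF M s B aB sB n(2)])
    also have "(2 * B + 1/2) * min (real k) ((B + 1) * s + 1) / s \<le> (2 * B + 1/2) * (B + 2)"
      using mb[of "2 * B + 1/2" "real k"] B by simp
    moreover have "real k = \<bar>real n - real M\<bar>" using False by (simp add: k_def of_nat_diff)
    ultimately show ?thesis by simp
  qed
qed


context player
begin

lemma u_bound: "\<exists>Dc. 0 < Dc \<and> eventually (\<lambda>m. \<forall>n. exp (Lu (a m) n - Lu (a m) (N m)) \<le> Dc * exp (- \<bar>real n - real (N m)\<bar> / (2 * sqrt (real (N m))))) sequentially"
proof -
  define B where "B = \<bar>\<beta>\<bar> + 1"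
  have B: "0 \<le> B" by (simp add: B_def)
  have e1: "eventually (\<lambda>m. \<bar>(a m - real (N m)) / sqrt (real (N m))\<bar> < B) sequentially"
  proof -
    have "(\<lambda>m. \<bar>(a m - real (N m)) / sqrt (real (N m))\<bar>) \<longlonglongrightarrow> \<bar>\<beta>\<bar>" by (rule tendsto_rabs[OF alim])
    then show ?thesis by (rule order_tendstoD) (simp add: B_def)
  qed
  have e2: "eventually (\<lambda>m. 2 * B + 2 \<le> sqrt (real (N m))) sequentially"
    using slim by (simp add: filterlim_at_top)
  define C0 where "C0 = (2 * B + 1/2) * (B + 2)"
  have "eventually (\<lambda>m. \<forall>n. exp (Lu (a m) n - Lu (a m) (N m)) \<le> exp C0 * exp (- \<bar>real n - real (N m)\<bar> / (2 * sqrt (real (N m))))) sequentially"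
    using e1 e2
  proof eventually_elim
    case (elim m)
    have sp: "0 < sqrt (real (N m))" by (rule s_pos)
    have aB: "\<bar>a m - real (N m)\<bar> \<le> B * sqrt (real (N m))"
      using elim(1) sp by (simp add: abs_divide pos_divide_less_eq)
    show ?case
    proof
      fix n
      have "Lu (a m) n - Lu (a m) (N m) \<le> C0 - \<bar>real n - real (N m)\<bar> / (2 * sqrt (real (N m)))"
        unfolding C0_def by (rule Lu_bound[OF Npos refl B aB elim(2)])
      then show "exp (Lu (a m) n - Lu (a m) (N m)) \<le> exp C0 * exp (- \<bar>real n - real (N m)\<bar> / (2 * sqrt (real (N m))))"
        by (simp add: exp_add[symmetric])
    qed
  qed
  then show ?thesis by (intro exI[of _ "exp C0"]) simp
qed

end

lemma floor_lim:
  fixes s C :: "nat \<Rightarrow> real"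
  assumes s: "filterlim s at_top sequentially" "\<And>m. 0 < s m"
    and C: "filterlim (\<lambda>m. C m / s m) at_top sequentially"
  shows "(\<lambda>m. (real (nat \<lfloor>C m + s m * t\<rfloor>) - C m) / s m) \<longlonglongrightarrow> t"
proof -
  have is0: "(\<lambda>m. 1 / s m) \<longlonglongrightarrow> 0"
    using tendsto_inverse_0_at_top[OF s(1)] by (simp add: divide_inverse)
  have ev: "eventually (\<lambda>m. - t \<le> C m / s m) sequentially"
    using C by (simp add: filterlim_at_top)
  have "eventually (\<lambda>m. \<bar>(real (nat \<lfloor>C m + s m * t\<rfloor>) - C m) / s m - t\<bar> \<le> 1 / s m) sequentially"
    using ev
  proof eventually_elim
    case (elim m)
    have sp: "0 < s m" by (rule s(2))
    have nn: "0 \<le> C m + s m * t" using elim sp by (simp add: field_simps)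
    have f1: "real (nat \<lfloor>C m + s m * t\<rfloor>) \<le> C m + s m * t" "C m + s m * t < real (nat \<lfloor>C m + s m * t\<rfloor>) + 1"
      using nn by linarith+
    have "(real (nat \<lfloor>C m + s m * t\<rfloor>) - C m) / s m - t = (real (nat \<lfloor>C m + s m * t\<rfloor>) - (C m + s m * t)) / s m"
      using sp by (simp add: field_simps)
    moreover have "\<bar>real (nat \<lfloor>C m + s m * t\<rfloor>) - (C m + s m * t)\<bar> \<le> 1" using f1 by linarith
    ultimately show ?case using sp by (simp add: abs_divide divide_right_mono)
  qed
  then have "(\<lambda>m. (real (nat \<lfloor>C m + s m * t\<rfloor>) - C m) / s m - t) \<longlonglongrightarrow> 0"
    by (intro Lim_null_comparison[OF _ is0]) simp
  then show ?thesis by (simp add: LIM_zero_iff)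
qed

lemma soft_cut:
  fixes s C b :: "nat \<Rightarrow> real" and n :: "nat \<Rightarrow> nat" and ch :: "nat \<Rightarrow> nat \<Rightarrow> real"
  assumes s: "filterlim s at_top sequentially" "\<And>m. 0 < s m"
    and nl: "(\<lambda>m. (real (n m) - C m) / s m) \<longlonglongrightarrow> t"
    and bl: "(\<lambda>m. (b m - C m) / s m) \<longlonglongrightarrow> c"
    and tc: "t \<noteq> c"
    and ch1: "\<And>m x. real x \<le> b m \<Longrightarrow> ch m x = 1"
    and ch0: "\<And>m x. b m + 2 \<le> real x \<Longrightarrow> ch m x = 0"
  shows "(\<lambda>m. ch m (n m)) \<longlonglongrightarrow> indicator {..c} t"
proof -
  have d: "(\<lambda>m. (real (n m) - b m) / s m) \<longlonglongrightarrow> t - c"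
  proof -
    have "(\<lambda>m. (real (n m) - C m) / s m - (b m - C m) / s m) \<longlonglongrightarrow> t - c" by (intro tendsto_diff nl bl)
    moreover have "(real (n m) - C m) / s m - (b m - C m) / s m = (real (n m) - b m) / s m" for m
      by (simp add: diff_divide_distrib)
    ultimately show ?thesis by simp
  qed
  show ?thesis
  proof (cases "t < c")
    case True
    have "eventually (\<lambda>m. (real (n m) - b m) / s m < 0) sequentially"
      using d True by (intro order_tendstoD) auto
    then have "eventually (\<lambda>m. ch m (n m) = 1) sequentially"
    proof (rule eventually_mono)
      fix m assume "(real (n m) - b m) / s m < 0"
      then have "real (n m) - b m < 0" using s(2)[of m] by (simp add: divide_less_0_iff)
      then show "ch m (n m) = 1" using ch1 by simp
    qed
    then have "(\<lambda>m. ch m (n m)) \<longlonglongrightarrow> 1" by (rule tendsto_eventually)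
    then show ?thesis using True by simp
  next
    case False
    then have tc': "c < t" using tc by simp
    have "eventually (\<lambda>m. (t - c) / 2 < (real (n m) - b m) / s m) sequentially"
      using d tc' by (intro order_tendstoD) auto
    moreover have "eventually (\<lambda>m. 4 / (t - c) \<le> s m) sequentially"
      using s(1) by (simp add: filterlim_at_top)
    ultimately have "eventually (\<lambda>m. ch m (n m) = 0) sequentially"
    proof eventually_elim
      case (elim m)
      have sp: "0 < s m" by (rule s(2))
      have "(t - c) / 2 * s m < real (n m) - b m" using elim(1) sp by (simp add: pos_less_divide_eq)
      moreover have "2 \<le> (t - c) / 2 * s m"
        using elim(2) tc' by (simp add: pos_divide_le_eq field_simps)
      ultimately show ?case using ch0 by simp
    qed
    then have "(\<lambda>m. ch m (n m)) \<longlonglongrightarrow> 0" by (rule tendsto_eventually)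
    then show ?thesis using tc' by simp
  qed
qed

lemma psi_eq: "exp (\<beta> * t - t\<^sup>2 / 2) / (sqrt (2 * pi) * exp (\<beta>\<^sup>2 / 2)) = std_normal_density (t - \<beta>)"
proof -
  have "exp (\<beta> * t - t\<^sup>2 / 2) = exp (- (t - \<beta>)\<^sup>2 / 2) * exp (\<beta>\<^sup>2 / 2)"
    by (simp add: exp_add[symmetric] power2_eq_square field_simps)
  then show ?thesis by (simp add: std_normal_density_def)
qed

lemma integrable_snd_shift: "integrable lborel (\<lambda>y. std_normal_density (y - \<beta>))"
proof -
  have "integrable lborel (\<lambda>x. std_normal_density x)"
    using integrable_std_normal_moment[of 0] by simp
  then show ?thesis
    using lborel_integrable_real_affine_iff[of 1 "\<lambda>x. std_normal_density x" "- \<beta>"] by simp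
qed

lemma Phi_integral: "(LINT y|lborel. std_normal_density (y - \<beta>) * indicator {..b} y) = Phi (b - \<beta>)"
proof -
  have "(LINT x|lborel. indicator {..b - \<beta>} x * std_normal_density x)
      = (LINT y|lborel. indicator {..b - \<beta>} (y - \<beta>) * std_normal_density (y - \<beta>))"
    using lborel_integral_real_affine[of 1 "\<lambda>x. indicator {..b - \<beta>} x * std_normal_density x" "- \<beta>"] by simp
  moreover have "indicator {..b - \<beta>} (y - \<beta>) = (indicator {..b} y :: real)" for y
    by (simp add: indicator_def)
  ultimately show ?thesis unfolding Phi_def set_lebesgue_integral_def by (simp add: ac_simps)
qed

lemma Phi_mono: "mono Phi"
proof
  fix x y :: real assume xy: "x \<le> y"
  have "(LINT t|lborel. std_normal_density (t - 0) * indicator {..x} t) \<le> (LINT t|lborel. std_normal_density (t - 0) * indicator {..y} t)"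
  proof (rule integral_mono)
    show "integrable lborel (\<lambda>t. std_normal_density (t - 0) * indicator {..x} t)"
      using integrable_snd_shift[of 0] by (intro integrable_real_mult_indicator) auto
    show "integrable lborel (\<lambda>t. std_normal_density (t - 0) * indicator {..y} t)"
      using integrable_snd_shift[of 0] by (intro integrable_real_mult_indicator) auto
    show "std_normal_density (t - 0) * indicator {..x} t \<le> std_normal_density (t - 0) * indicator {..y} t" for t
      using xy by (auto simp: indicator_def normal_density_nonneg)
  qed
  then show "Phi x \<le> Phi y" using Phi_integral[of 0 x] Phi_integral[of 0 y] by simp
qed

lemma Phi_measurable[measurable]: "Phi \<in> borel_measurable borel"
  by (rule borel_measurable_mono[OF Phi_mono])

lemma floor_div_lim:
  fixes x s :: "nat \<Rightarrow> real"
  assumes s: "filterlim s at_top sequentially" "\<And>m. 0 < s m" and xl: "(\<lambda>m. x m / s m) \<longlonglongrightarrow> c"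
  shows "(\<lambda>m. real_of_int \<lfloor>x m\<rfloor> / s m) \<longlonglongrightarrow> c"
proof -
  have is0: "(\<lambda>m. 1 / s m) \<longlonglongrightarrow> 0"
    using tendsto_inverse_0_at_top[OF s(1)] by (simp add: divide_inverse)
  have "(\<lambda>m. real_of_int \<lfloor>x m\<rfloor> / s m - x m / s m) \<longlonglongrightarrow> 0"
  proof (rule Lim_null_comparison[OF _ is0])
    show "eventually (\<lambda>m. norm (real_of_int \<lfloor>x m\<rfloor> / s m - x m / s m) \<le> 1 / s m) sequentially"
    proof (rule always_eventually, rule allI)
      fix m
      have "\<bar>real_of_int \<lfloor>x m\<rfloor> - x m\<bar> \<le> 1" by linarith
      then have "\<bar>real_of_int \<lfloor>x m\<rfloor> - x m\<bar> / s m \<le> 1 / s m" using s(2)[of m] by (intro divide_right_mono) auto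
      then show "norm (real_of_int \<lfloor>x m\<rfloor> / s m - x m / s m) \<le> 1 / s m"
        using s(2)[of m] by (simp add: diff_divide_distrib[symmetric] abs_divide)
    qed
  qed
  from tendsto_add[OF this xl] show ?thesis by simp
qed

locale twop =
  fixes \<alpha>1 \<alpha>2 \<beta>1 \<beta>2 \<gamma>1 \<gamma>2 :: real and N :: "nat \<Rightarrow> real" and N1 N2 :: "nat \<Rightarrow> nat"
    and k1 k2 a1 a2 :: "nat \<Rightarrow> real"
  assumes al1: "0 < \<alpha>1" and al2: "0 < \<alpha>2" and ga1: "0 \<le> \<gamma>1" and ga2: "0 \<le> \<gamma>2"
    and Nlim: "filterlim N at_top sequentially"
    and N1pos: "\<And>m. 0 < N1 m" and N2pos: "\<And>m. 0 < N2 m"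
    and N1eq: "\<And>m. real (N1 m) = \<alpha>1 * N m" and N2eq: "\<And>m. real (N2 m) = \<alpha>2 * N m"
    and a1pos: "\<And>m. 0 < a1 m" and a2pos: "\<And>m. 0 < a2 m"
    and k1b: "\<And>m. 0 \<le> k1 m \<and> k1 m \<le> real (N1 m)" and k2b: "\<And>m. 0 \<le> k2 m \<and> k2 m \<le> real (N2 m)"
    and a1lim: "(\<lambda>m. (a1 m - real (N1 m)) / sqrt (real (N1 m))) \<longlonglongrightarrow> \<beta>1"
    and a2lim: "(\<lambda>m. (a2 m - real (N2 m)) / sqrt (real (N2 m))) \<longlonglongrightarrow> \<beta>2"
    and k1lim: "(\<lambda>m. k1 m / sqrt (real (N1 m))) \<longlonglongrightarrow> \<gamma>1"
    and k2lim: "(\<lambda>m. k2 m / sqrt (real (N2 m))) \<longlonglongrightarrow> \<gamma>2"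
begin

definition "s1 m = sqrt (real (N1 m))"
definition "s2 m = sqrt (real (N2 m))"
definition "r = sqrt (\<alpha>1 / \<alpha>2)"
definition "c1 = \<gamma>2 * sqrt (\<alpha>2 / \<alpha>1)"
definition "c2 = \<gamma>1 * sqrt (\<alpha>1 / \<alpha>2)"
definition "K1 = sqrt (2 * pi) * exp (\<beta>1\<^sup>2 / 2)"
definition "K2 = sqrt (2 * pi) * exp (\<beta>2\<^sup>2 / 2)"
definition "U1 m n = exp (Lu (a1 m) n - Lu (a1 m) (N1 m)) / K1"
definition "U2 m n = exp (Lu (a2 m) n - Lu (a2 m) (N2 m)) / K2"
definition "V1 m n = cutw (k2 m) (N1 m) n"
definition "V2 m n = cutw (k1 m) (N2 m) n"
definition "T m = N1 m + N2 m"

lemma Npos: "0 < N m"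
proof -
  have "0 < \<alpha>1 * N m" using N1pos[of m] N1eq[of m] by (metis of_nat_0_less_iff)
  then show ?thesis using al1 by (simp add: zero_less_mult_iff)
qed

lemma s1pos: "0 < s1 m" using N1pos by (simp add: s1_def)
lemma s2pos: "0 < s2 m" using N2pos by (simp add: s2_def)
lemma rpos: "0 < r" using al1 al2 by (simp add: r_def)

lemma s1_eq: "s1 m = r * s2 m"
proof -
  have "r * s2 m = sqrt (\<alpha>1 / \<alpha>2 * (\<alpha>2 * N m))" by (simp only: r_def s2_def N2eq real_sqrt_mult)
  also have "\<alpha>1 / \<alpha>2 * (\<alpha>2 * N m) = \<alpha>1 * N m" using al2 by simp
  finally show ?thesis by (simp add: s1_def N1eq)
qed

lemma s1_sqrtN: "s1 m = sqrt \<alpha>1 * sqrt (N m)" by (simp add: s1_def N1eq real_sqrt_mult)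
lemma s2_sqrtN: "s2 m = sqrt \<alpha>2 * sqrt (N m)" by (simp add: s2_def N2eq real_sqrt_mult)

lemma sqrtN_lim: "filterlim (\<lambda>m. sqrt (N m)) at_top sequentially"
  by (rule filterlim_compose[OF sqrt_at_top Nlim])

lemma s1_lim: "filterlim s1 at_top sequentially"
  unfolding s1_sqrtN using al1 by (intro filterlim_tendsto_pos_mult_at_top[OF tendsto_const _ sqrtN_lim]) auto

lemma s2_lim: "filterlim s2 at_top sequentially"
  unfolding s2_sqrtN using al2 by (intro filterlim_tendsto_pos_mult_at_top[OF tendsto_const _ sqrtN_lim]) auto

lemma N1_over_s1: "filterlim (\<lambda>m. real (N1 m) / s1 m) at_top sequentially"
proof -
  have "real (N1 m) / s1 m = s1 m" for m using N1pos[of m] by (simp add: s1_def real_div_sqrt)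
  then show ?thesis using s1_lim by simp
qed

lemma N2_over_s2: "filterlim (\<lambda>m. real (N2 m) / s2 m) at_top sequentially"
proof -
  have "real (N2 m) / s2 m = s2 m" for m using N2pos[of m] by (simp add: s2_def real_div_sqrt)
  then show ?thesis using s2_lim by simp
qed

sublocale p1: player N1 a1 \<beta>1
  by unfold_locales (use N1pos a1pos a1lim s1_lim[unfolded s1_def[abs_def]] in simp_all)

sublocale p2: player N2 a2 \<beta>2
  by unfold_locales (use N2pos a2pos a2lim s2_lim[unfolded s2_def[abs_def]] in simp_all)


lemma U1_lim: "(\<lambda>m. (real (n m) - real (N1 m)) / s1 m) \<longlonglongrightarrow> t \<Longrightarrow> (\<lambda>m. U1 m (n m)) \<longlonglongrightarrow> std_normal_density (t - \<beta>1)"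
  unfolding U1_def psi_eq[symmetric] K1_def
  by (intro tendsto_divide tendsto_const p1.local_limit) (simp_all add: s1_def)

lemma U2_lim: "(\<lambda>m. (real (n m) - real (N2 m)) / s2 m) \<longlonglongrightarrow> t \<Longrightarrow> (\<lambda>m. U2 m (n m)) \<longlonglongrightarrow> std_normal_density (t - \<beta>2)"
  unfolding U2_def psi_eq[symmetric] K2_def
  by (intro tendsto_divide tendsto_const p2.local_limit) (simp_all add: s2_def)

lemma U1_nonneg: "0 \<le> U1 m n" by (simp add: U1_def K1_def)
lemma U2_nonneg: "0 \<le> U2 m n" by (simp add: U2_def K2_def)

lemma U1_bound: "\<exists>D. 0 < D \<and> eventually (\<lambda>m. \<forall>n. U1 m n \<le> D * exp (- \<bar>real n - real (N1 m)\<bar> / (2 * s1 m))) sequentially"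
proof -
  obtain D where D: "0 < D" "eventually (\<lambda>m. \<forall>n. exp (Lu (a1 m) n - Lu (a1 m) (N1 m)) \<le> D * exp (- \<bar>real n - real (N1 m)\<bar> / (2 * sqrt (real (N1 m))))) sequentially"
    using p1.u_bound by blast
  have K: "0 < K1" by (simp add: K1_def)
  show ?thesis
  proof (intro exI conjI)
    show "0 < D / K1" using D K by simp
    show "eventually (\<lambda>m. \<forall>n. U1 m n \<le> D / K1 * exp (- \<bar>real n - real (N1 m)\<bar> / (2 * s1 m))) sequentially"
      using D(2) by eventually_elim (use K in \<open>auto simp: U1_def s1_def divide_right_mono\<close>)
  qed
qed

lemma U2_bound: "\<exists>D. 0 < D \<and> eventually (\<lambda>m. \<forall>n. U2 m n \<le> D * exp (- \<bar>real n - real (N2 m)\<bar> / (2 * s2 m))) sequentially"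
proof -
  obtain D where D: "0 < D" "eventually (\<lambda>m. \<forall>n. exp (Lu (a2 m) n - Lu (a2 m) (N2 m)) \<le> D * exp (- \<bar>real n - real (N2 m)\<bar> / (2 * sqrt (real (N2 m))))) sequentially"
    using p2.u_bound by blast
  have K: "0 < K2" by (simp add: K2_def)
  show ?thesis
  proof (intro exI conjI)
    show "0 < D / K2" using D K by simp
    show "eventually (\<lambda>m. \<forall>n. U2 m n \<le> D / K2 * exp (- \<bar>real n - real (N2 m)\<bar> / (2 * s2 m))) sequentially"
      using D(2) by eventually_elim (use K in \<open>auto simp: U2_def s2_def divide_right_mono\<close>)
  qed
qed

definition "b1 m = real (N1 m + nat \<lfloor>k2 m\<rfloor>)"
definition "b2 m = real (N2 m + nat \<lfloor>k1 m\<rfloor>)"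

lemma V1_one: "real x \<le> b1 m \<Longrightarrow> V1 m x = 1"
  using k2b[of m] by (simp add: V1_def b1_def cutw_explicit)
lemma V1_zero: "b1 m + 2 \<le> real x \<Longrightarrow> V1 m x = 0"
proof -
  assume h: "b1 m + 2 \<le> real x"
  have "b1 m + 2 = real (N1 m + nat \<lfloor>k2 m\<rfloor> + 2)" by (simp add: b1_def)
  then have "N1 m + nat \<lfloor>k2 m\<rfloor> + 2 \<le> x" using h by linarith
  then show ?thesis using k2b[of m] by (simp add: V1_def cutw_explicit)
qed
lemma V2_one: "real x \<le> b2 m \<Longrightarrow> V2 m x = 1"
  using k1b[of m] by (simp add: V2_def b2_def cutw_explicit)
lemma V2_zero: "b2 m + 2 \<le> real x \<Longrightarrow> V2 m x = 0"
proof -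
  assume h: "b2 m + 2 \<le> real x"
  have "b2 m + 2 = real (N2 m + nat \<lfloor>k1 m\<rfloor> + 2)" by (simp add: b2_def)
  then have "N2 m + nat \<lfloor>k1 m\<rfloor> + 2 \<le> x" using h by linarith
  then show ?thesis using k1b[of m] by (simp add: V2_def cutw_explicit)
qed
lemma V1_nonneg: "0 \<le> V1 m x" by (simp add: V1_def cutw_nonneg)
lemma V1_le1: "V1 m x \<le> 1" by (simp add: V1_def cutw_le1)
lemma V2_nonneg: "0 \<le> V2 m x" by (simp add: V2_def cutw_nonneg)
lemma V2_le1: "V2 m x \<le> 1" by (simp add: V2_def cutw_le1)

lemma b1_lim: "(\<lambda>m. (b1 m - real (N1 m)) / s1 m) \<longlonglongrightarrow> c1"
proof -
  have k: "(\<lambda>m. k2 m / s1 m) \<longlonglongrightarrow> \<gamma>2 / r"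
  proof -
    have eqf: "(\<lambda>m. k2 m / s1 m) = (\<lambda>m. (k2 m / s2 m) / r)"
      by (rule ext) (simp add: s1_eq divide_divide_eq_left mult.commute)
    show ?thesis unfolding eqf
      using k2lim rpos by (intro tendsto_divide tendsto_const) (simp_all add: s2_def)
  qed
  have c: "\<gamma>2 / r = c1" using al1 al2 by (simp add: c1_def r_def real_sqrt_divide)
  have eqf: "(\<lambda>m. (b1 m - real (N1 m)) / s1 m) = (\<lambda>m. real_of_int \<lfloor>k2 m\<rfloor> / s1 m)"
    by (rule ext) (use k2b in \<open>simp add: b1_def\<close>)
  show ?thesis unfolding eqf c[symmetric] by (rule floor_div_lim[OF s1_lim s1pos k])
qed

lemma b2_lim: "(\<lambda>m. (b2 m - real (N2 m)) / s2 m) \<longlonglongrightarrow> c2"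
proof -
  have k: "(\<lambda>m. k1 m / s2 m) \<longlonglongrightarrow> \<gamma>1 * r"
  proof -
    have eqf: "(\<lambda>m. k1 m / s2 m) = (\<lambda>m. (k1 m / s1 m) * r)"
      by (rule ext) (use s2pos rpos in \<open>simp add: s1_eq\<close>)
    show ?thesis unfolding eqf
      using k1lim by (intro tendsto_mult tendsto_const) (simp_all add: s1_def)
  qed
  have c: "\<gamma>1 * r = c2" by (simp add: c2_def r_def)
  have eqf: "(\<lambda>m. (b2 m - real (N2 m)) / s2 m) = (\<lambda>m. real_of_int \<lfloor>k1 m\<rfloor> / s2 m)"
    by (rule ext) (use k1b in \<open>simp add: b2_def\<close>)
  show ?thesis unfolding eqf c[symmetric] by (rule floor_div_lim[OF s2_lim s2pos k])
qed


lemma snd_measurable[measurable]: "(\<lambda>t. std_normal_density (t - \<beta>)) \<in> borel_measurable borel"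
  unfolding std_normal_density_def by measurable

lemma ind_min: "indicator {..c::real} t * indicator {..d} t = (indicator {..min c d} t :: real)"
  by (auto simp: indicator_def min_def)

lemma inner_lim:
  fixes b :: "nat \<Rightarrow> nat"
  assumes bl: "(\<lambda>m. (real (b m) - real (N2 m)) / s2 m) \<longlonglongrightarrow> d"
  shows "(\<lambda>m. (\<Sum>n\<le>b m. U2 m n * V2 m n) / s2 m) \<longlonglongrightarrow> Phi (min c2 d - \<beta>2)"
proof -
  obtain D where D: "0 < D" "eventually (\<lambda>m. \<forall>n. U2 m n \<le> D * exp (- \<bar>real n - real (N2 m)\<bar> / (2 * s2 m))) sequentially"
    using U2_bound by blast
  define h where "h m n = U2 m n * V2 m n * of_bool (n \<le> b m)" for m n
  define H where "H t = std_normal_density (t - \<beta>2) * indicator {..c2} t * indicator {..d} t" for t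
  have eq: "(\<Sum>n\<le>b m. U2 m n * V2 m n) = (\<Sum>n\<le>b m. h m n)" for m
    by (rule sum.cong) (auto simp: h_def)
  have lim: "(\<lambda>m. (\<Sum>n\<le>b m. h m n) / s2 m) \<longlonglongrightarrow> (LINT t|lborel. H t)"
  proof (rule sum_limit[where C = "\<lambda>m. real (N2 m)" and E = "{c2, d}" and D = D])
    show "filterlim s2 at_top sequentially" by (rule s2_lim)
    show "\<And>m. 0 < s2 m" by (rule s2pos)
    show "filterlim (\<lambda>m. real (N2 m) / s2 m) at_top sequentially" by (rule N2_over_s2)
    show "\<And>m n. b m < n \<Longrightarrow> h m n = 0" by (simp add: h_def)
    show "eventually (\<lambda>m. \<forall>n. \<bar>h m n\<bar> \<le> D * exp (- \<bar>real n - real (N2 m)\<bar> / (2 * s2 m))) sequentially"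
      using D(2)
    proof eventually_elim
      case (elim m)
      show ?case
      proof
        fix n
        have "\<bar>h m n\<bar> \<le> U2 m n" unfolding h_def using U2_nonneg[of m n] V2_nonneg[of m n] V2_le1[of m n]
          by (auto simp: abs_mult intro: mult_left_le)
        then show "\<bar>h m n\<bar> \<le> D * exp (- \<bar>real n - real (N2 m)\<bar> / (2 * s2 m))" using elim by (meson order_trans)
      qed
    qed
    show "finite {c2, d}" by simp
    show "H \<in> borel_measurable lborel" unfolding H_def by measurable
    fix t assume t: "t \<notin> {c2, d}"
    define n where "n m = nat \<lfloor>real (N2 m) + s2 m * t\<rfloor>" for m
    have nl: "(\<lambda>m. (real (n m) - real (N2 m)) / s2 m) \<longlonglongrightarrow> t"
      unfolding n_def by (rule floor_lim[OF s2_lim s2pos N2_over_s2])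
    have l1: "(\<lambda>m. U2 m (n m)) \<longlonglongrightarrow> std_normal_density (t - \<beta>2)" by (rule U2_lim[OF nl])
    have l2: "(\<lambda>m. V2 m (n m)) \<longlonglongrightarrow> indicator {..c2} t"
      by (rule soft_cut[OF s2_lim s2pos nl b2_lim]) (use t V2_one V2_zero in auto)
    have l3: "(\<lambda>m. of_bool (n m \<le> b m) :: real) \<longlonglongrightarrow> indicator {..d} t"
      by (rule soft_cut[OF s2_lim s2pos nl bl, where ch = "\<lambda>m x. of_bool (x \<le> b m)"]) (use t in auto)
    show "(\<lambda>m. h m (nat \<lfloor>real (N2 m) + s2 m * t\<rfloor>)) \<longlonglongrightarrow> H t"
      unfolding h_def H_def n_def[symmetric] by (intro tendsto_mult l1 l2 l3)
  qed
  have "(LINT t|lborel. H t) = Phi (min c2 d - \<beta>2)"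
    unfolding H_def mult.assoc ind_min by (rule Phi_integral)
  then show ?thesis using lim unfolding eq by simp
qed


lemma sum_le_support:
  fixes f :: "nat \<Rightarrow> real"
  assumes "\<And>n. 0 \<le> f n" "\<And>n. B < n \<Longrightarrow> f n = 0"
  shows "(\<Sum>n\<le>c. f n) \<le> (\<Sum>n\<le>B. f n)"
proof -
  have "(\<Sum>n\<le>c. f n) = (\<Sum>n\<in>{..c} \<inter> {..B}. f n)"
  proof (rule sum.mono_neutral_right)
    show "\<forall>i\<in>{..c} - {..c} \<inter> {..B}. f i = 0"
    proof
      fix i assume "i \<in> {..c} - {..c} \<inter> {..B}"
      then have "B < i" by auto
      then show "f i = 0" by (rule assms(2))
    qed
  qed auto
  also have "\<dots> \<le> (\<Sum>n\<le>B. f n)"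
    by (rule sum_mono2) (use assms in auto)
  finally show ?thesis .
qed

lemma N2_over_s1: "filterlim (\<lambda>m. real (N2 m) / s1 m) at_top sequentially"
proof -
  have eqf: "(\<lambda>m. real (N2 m) / s1 m) = (\<lambda>m. (real (N2 m) / s2 m) * (1 / r))"
    by (rule ext) (simp add: s1_eq mult.commute)
  show ?thesis unfolding eqf
    using rpos by (intro filterlim_at_top_mult_tendsto_pos[OF tendsto_const _ N2_over_s2]) simp
qed

lemma ev_le_T:
  assumes nl: "(\<lambda>m. (real (n m) - real (N1 m)) / s1 m) \<longlonglongrightarrow> t"
  shows "eventually (\<lambda>m. n m \<le> T m) sequentially"
proof -
  have "filterlim (\<lambda>m. (- ((real (n m) - real (N1 m)) / s1 m)) + real (N2 m) / s1 m) at_top sequentially"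
    by (rule filterlim_tendsto_add_at_top[OF tendsto_minus[OF nl] N2_over_s1])
  then have "eventually (\<lambda>m. 0 \<le> (- ((real (n m) - real (N1 m)) / s1 m)) + real (N2 m) / s1 m) sequentially"
    by (rule filterlim_at_top[THEN iffD1, rule_format])
  then show ?thesis
  proof (rule eventually_mono)
    fix m assume "0 \<le> (- ((real (n m) - real (N1 m)) / s1 m)) + real (N2 m) / s1 m"
    then have "0 \<le> (real (N2 m) - (real (n m) - real (N1 m))) / s1 m" by (simp add: diff_divide_distrib)
    then have "0 \<le> real (N2 m) - (real (n m) - real (N1 m))" using s1pos[of m] by (simp add: zero_le_divide_iff)
    then show "n m \<le> T m" by (simp add: T_def)
  qed
qed

lemma Tn_lim:
  assumes nl: "(\<lambda>m. (real (n m) - real (N1 m)) / s1 m) \<longlonglongrightarrow> t"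
  shows "(\<lambda>m. (real (T m - n m) - real (N2 m)) / s2 m) \<longlonglongrightarrow> - r * t"
proof -
  have "(\<lambda>m. - r * ((real (n m) - real (N1 m)) / s1 m)) \<longlonglongrightarrow> - r * t" by (intro tendsto_mult tendsto_const nl)
  moreover have "eventually (\<lambda>m. - r * ((real (n m) - real (N1 m)) / s1 m) = (real (T m - n m) - real (N2 m)) / s2 m) sequentially"
    using ev_le_T[OF nl]
  proof (rule eventually_mono)
    fix m assume "n m \<le> T m"
    then have e: "real (T m - n m) - real (N2 m) = real (N1 m) - real (n m)" by (simp add: T_def of_nat_diff)
    have "- r * ((real (n m) - real (N1 m)) / s1 m) = (real (N1 m) - real (n m)) / s2 m"
      unfolding s1_eq using rpos s2pos[of m] by (simp add: field_simps)
    then show "- r * ((real (n m) - real (N1 m)) / s1 m) = (real (T m - n m) - real (N2 m)) / s2 m"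
      unfolding e .
  qed
  ultimately show ?thesis by (rule Lim_transform_eventually)
qed

definition "ZZ m = (\<Sum>n1\<le>T m. U1 m n1 * V1 m n1 * (\<Sum>n2\<le>T m - n1. U2 m n2 * V2 m n2))"

lemma G2bound: "\<exists>K. \<forall>m n1. (\<Sum>n2\<le>T m - n1. U2 m n2 * V2 m n2) / s2 m \<le> K"
proof -
  define B where "B m = N2 m + nat \<lfloor>k1 m\<rfloor> + 1" for m
  have Bl: "(\<lambda>m. (real (B m) - real (N2 m)) / s2 m) \<longlonglongrightarrow> c2 + 0"
  proof -
    have e: "(real (B m) - real (N2 m)) / s2 m = (b2 m - real (N2 m)) / s2 m + 1 / s2 m" for m
      by (simp add: B_def b2_def add_divide_distrib)
    have "(\<lambda>m. 1 / s2 m) \<longlonglongrightarrow> 0" using tendsto_inverse_0_at_top[OF s2_lim] by (simp add: divide_inverse)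
    then show ?thesis unfolding e by (intro tendsto_add b2_lim)
  qed
  have conv: "convergent (\<lambda>m. (\<Sum>n\<le>B m. U2 m n * V2 m n) / s2 m)"
    using inner_lim[OF Bl] by (auto simp: convergent_def)
  then have "Bseq (\<lambda>m. (\<Sum>n\<le>B m. U2 m n * V2 m n) / s2 m)" by (rule convergent_imp_Bseq)
  then obtain K where K: "\<And>m. norm ((\<Sum>n\<le>B m. U2 m n * V2 m n) / s2 m) \<le> K"
    unfolding Bseq_def by blast
  have "(\<Sum>n2\<le>T m - n1. U2 m n2 * V2 m n2) / s2 m \<le> K" for m n1
  proof -
    have "(\<Sum>n2\<le>T m - n1. U2 m n2 * V2 m n2) \<le> (\<Sum>n\<le>B m. U2 m n * V2 m n)"
    proof (rule sum_le_support)
      show "0 \<le> U2 m n * V2 m n" for n using U2_nonneg V2_nonneg by simp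
      show "U2 m n * V2 m n = 0" if "B m < n" for n
      proof -
        have "b2 m + 2 \<le> real n" using that by (simp add: B_def b2_def)
        then show ?thesis by (simp add: V2_zero)
      qed
    qed
    then have "(\<Sum>n2\<le>T m - n1. U2 m n2 * V2 m n2) / s2 m \<le> (\<Sum>n\<le>B m. U2 m n * V2 m n) / s2 m"
      using s2pos[of m] by (intro divide_right_mono) auto
    also have "\<dots> \<le> K" using K[of m] by (simp only: real_norm_def)
    finally show ?thesis .
  qed
  then show ?thesis by blast
qed

lemma ZZ_lim: "(\<lambda>m. ZZ m / (s1 m * s2 m)) \<longlonglongrightarrow>
   (LINT t|lborel. std_normal_density (t - \<beta>1) * indicator {..c1} t * Phi (min c2 (- r * t) - \<beta>2))"
proof -
  obtain D where D: "0 < D" "eventually (\<lambda>m. \<forall>n. U1 m n \<le> D * exp (- \<bar>real n - real (N1 m)\<bar> / (2 * s1 m))) sequentially"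
    using U1_bound by blast
  obtain K where K: "\<And>m n1. (\<Sum>n2\<le>T m - n1. U2 m n2 * V2 m n2) / s2 m \<le> K" using G2bound by blast
  have K0: "0 \<le> K"
  proof -
    have "0 \<le> (\<Sum>n2\<le>T 0 - 0. U2 0 n2 * V2 0 n2) / s2 0"
      using U2_nonneg V2_nonneg s2pos[of 0] by (intro divide_nonneg_pos sum_nonneg mult_nonneg_nonneg) auto
    then show ?thesis using K[of 0 0] by linarith
  qed
  define F where "F m n1 = (\<Sum>n2\<le>T m - n1. U2 m n2 * V2 m n2) / s2 m" for m n1
  have F0: "0 \<le> F m n1" for m n1 unfolding F_def using U2_nonneg V2_nonneg s2pos[of m]
    by (intro divide_nonneg_pos sum_nonneg mult_nonneg_nonneg) auto
  define h where "h m n1 = U1 m n1 * V1 m n1 * of_bool (n1 \<le> T m) * F m n1" for m n1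
  define H where "H t = std_normal_density (t - \<beta>1) * indicator {..c1} t * 1 * Phi (min c2 (- r * t) - \<beta>2)" for t
  have eq: "ZZ m / (s1 m * s2 m) = (\<Sum>n\<le>T m. h m n) / s1 m" for m
  proof -
    have "(\<Sum>n\<le>T m. h m n) = (\<Sum>n1\<le>T m. U1 m n1 * V1 m n1 * (\<Sum>n2\<le>T m - n1. U2 m n2 * V2 m n2) / s2 m)"
      by (rule sum.cong) (auto simp: h_def F_def)
    also have "\<dots> = (\<Sum>n1\<le>T m. U1 m n1 * V1 m n1 * (\<Sum>n2\<le>T m - n1. U2 m n2 * V2 m n2)) / s2 m"
      by (simp add: sum_divide_distrib)
    finally have "(\<Sum>n\<le>T m. h m n) = (\<Sum>n1\<le>T m. U1 m n1 * V1 m n1 * (\<Sum>n2\<le>T m - n1. U2 m n2 * V2 m n2)) / s2 m" .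
    then show ?thesis by (simp add: ZZ_def divide_divide_eq_left mult.commute)
  qed
  have lim: "(\<lambda>m. (\<Sum>n\<le>T m. h m n) / s1 m) \<longlonglongrightarrow> (LINT t|lborel. H t)"
  proof (rule sum_limit[where C = "\<lambda>m. real (N1 m)" and E = "{c1}" and D = "K * D"])
    show "filterlim s1 at_top sequentially" by (rule s1_lim)
    show "\<And>m. 0 < s1 m" by (rule s1pos)
    show "filterlim (\<lambda>m. real (N1 m) / s1 m) at_top sequentially" by (rule N1_over_s1)
    show "\<And>m n. T m < n \<Longrightarrow> h m n = 0" by (simp add: h_def)
    show "eventually (\<lambda>m. \<forall>n. \<bar>h m n\<bar> \<le> K * D * exp (- \<bar>real n - real (N1 m)\<bar> / (2 * s1 m))) sequentially"
      using D(2)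
    proof eventually_elim
      case (elim m)
      show ?case
      proof
        fix n
        have vb: "V1 m n * of_bool (n \<le> T m) \<le> 1" "0 \<le> V1 m n * of_bool (n \<le> T m)"
          using V1_nonneg[of m n] V1_le1[of m n] by auto
        have "V1 m n * of_bool (n \<le> T m) * F m n \<le> 1 * K"
          using vb F0[of m n] K[of m n] K0 unfolding F_def[symmetric] by (intro mult_mono) auto
        then have hb: "h m n \<le> U1 m n * K" unfolding h_def using U1_nonneg[of m n]
          by (simp add: mult.assoc mult_left_mono)
        have "0 \<le> h m n" unfolding h_def using U1_nonneg[of m n] V1_nonneg[of m n] F0[of m n] by (cases "n \<le> T m") simp_all
        then have "\<bar>h m n\<bar> \<le> U1 m n * K" using hb by simp
        also have "\<dots> \<le> D * exp (- \<bar>real n - real (N1 m)\<bar> / (2 * s1 m)) * K"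
          using elim K0 by (intro mult_right_mono) auto
        finally show "\<bar>h m n\<bar> \<le> K * D * exp (- \<bar>real n - real (N1 m)\<bar> / (2 * s1 m))" by (simp add: ac_simps)
      qed
    qed
    show "finite {c1}" by simp
    show "H \<in> borel_measurable lborel" unfolding H_def by measurable
    fix t assume t: "t \<notin> {c1}"
    define n where "n m = nat \<lfloor>real (N1 m) + s1 m * t\<rfloor>" for m
    have nl: "(\<lambda>m. (real (n m) - real (N1 m)) / s1 m) \<longlonglongrightarrow> t"
      unfolding n_def by (rule floor_lim[OF s1_lim s1pos N1_over_s1])
    have l1: "(\<lambda>m. U1 m (n m)) \<longlonglongrightarrow> std_normal_density (t - \<beta>1)" by (rule U1_lim[OF nl])
    have l2: "(\<lambda>m. V1 m (n m)) \<longlonglongrightarrow> indicator {..c1} t"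
      by (rule soft_cut[OF s1_lim s1pos nl b1_lim]) (use t V1_one V1_zero in auto)
    have l3: "(\<lambda>m. of_bool (n m \<le> T m) :: real) \<longlonglongrightarrow> 1"
      using ev_le_T[OF nl] by (intro tendsto_eventually) (auto elim: eventually_mono)
    have l4: "(\<lambda>m. F m (n m)) \<longlonglongrightarrow> Phi (min c2 (- r * t) - \<beta>2)"
      unfolding F_def by (rule inner_lim[OF Tn_lim[OF nl]])
    show "(\<lambda>m. h m (nat \<lfloor>real (N1 m) + s1 m * t\<rfloor>)) \<longlonglongrightarrow> H t"
      unfolding h_def H_def n_def[symmetric] by (intro tendsto_mult l1 l2 l3 l4)
  qed
  show ?thesis using lim unfolding eq H_def by simp
qed


definition "LL m = (\<Sum>n1\<le>T m. U1 m n1 * V1 m n1 * (U2 m (T m - n1) * V2 m (T m - n1)))"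

lemma LL_lim: "(\<lambda>m. LL m / s1 m) \<longlonglongrightarrow>
   (LINT t|lborel. std_normal_density (t - \<beta>1) * indicator {..c1} t * (std_normal_density (- r * t - \<beta>2) * indicator {..c2} (- r * t)))"
proof -
  obtain D where D: "0 < D" "eventually (\<lambda>m. \<forall>n. U1 m n \<le> D * exp (- \<bar>real n - real (N1 m)\<bar> / (2 * s1 m))) sequentially"
    using U1_bound by blast
  obtain D2 where D2: "0 < D2" "eventually (\<lambda>m. \<forall>n. U2 m n \<le> D2 * exp (- \<bar>real n - real (N2 m)\<bar> / (2 * s2 m))) sequentially"
    using U2_bound by blast
  define h where "h m n1 = U1 m n1 * V1 m n1 * of_bool (n1 \<le> T m) * (U2 m (T m - n1) * V2 m (T m - n1))" for m n1
  define H where "H t = std_normal_density (t - \<beta>1) * indicator {..c1} t * 1 * (std_normal_density (- r * t - \<beta>2) * indicator {..c2} (- r * t))" for t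
  have eq: "LL m = (\<Sum>n\<le>T m. h m n)" for m
    unfolding LL_def by (rule sum.cong) (auto simp: h_def)
  have lim: "(\<lambda>m. (\<Sum>n\<le>T m. h m n) / s1 m) \<longlonglongrightarrow> (LINT t|lborel. H t)"
  proof (rule sum_limit[where C = "\<lambda>m. real (N1 m)" and E = "{c1, - c2 / r}" and D = "D2 * D"])
    show "filterlim s1 at_top sequentially" by (rule s1_lim)
    show "\<And>m. 0 < s1 m" by (rule s1pos)
    show "filterlim (\<lambda>m. real (N1 m) / s1 m) at_top sequentially" by (rule N1_over_s1)
    show "\<And>m n. T m < n \<Longrightarrow> h m n = 0" by (simp add: h_def)
    show "eventually (\<lambda>m. \<forall>n. \<bar>h m n\<bar> \<le> D2 * D * exp (- \<bar>real n - real (N1 m)\<bar> / (2 * s1 m))) sequentially"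
      using D(2) D2(2)
    proof eventually_elim
      case (elim m)
      show ?case
      proof
        fix n
        have u2: "U2 m (T m - n) \<le> D2"
        proof -
          have "U2 m (T m - n) \<le> D2 * exp (- \<bar>real (T m - n) - real (N2 m)\<bar> / (2 * s2 m))" using elim(2) by blast
          also have "\<dots> \<le> D2 * 1" using D2(1) s2pos[of m] by (intro mult_left_mono) auto
          finally show ?thesis by simp
        qed
        have g: "0 \<le> V1 m n * of_bool (n \<le> T m) * V2 m (T m - n)" "V1 m n * of_bool (n \<le> T m) * V2 m (T m - n) \<le> 1"
          using V1_nonneg[of m n] V1_le1[of m n] V2_nonneg[of m "T m - n"] V2_le1[of m "T m - n"]
          by (auto intro: mult_le_one)
        have e: "h m n = U1 m n * U2 m (T m - n) * (V1 m n * of_bool (n \<le> T m) * V2 m (T m - n))"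
          by (simp add: h_def ac_simps)
        have "\<bar>h m n\<bar> \<le> U1 m n * U2 m (T m - n)"
          unfolding e using g U1_nonneg[of m n] U2_nonneg[of m "T m - n"]
          by (simp add: abs_mult mult_left_le)
        also have "\<dots> \<le> (D * exp (- \<bar>real n - real (N1 m)\<bar> / (2 * s1 m))) * D2"
          using elim(1) u2 U1_nonneg[of m n] U2_nonneg[of m "T m - n"] D2(1) D(1) by (intro mult_mono) auto
        finally show "\<bar>h m n\<bar> \<le> D2 * D * exp (- \<bar>real n - real (N1 m)\<bar> / (2 * s1 m))" by (simp add: ac_simps)
      qed
    qed
    show "finite {c1, - c2 / r}" by simp
    show "H \<in> borel_measurable lborel" unfolding H_def by measurable
    fix t assume t: "t \<notin> {c1, - c2 / r}"
    define n where "n m = nat \<lfloor>real (N1 m) + s1 m * t\<rfloor>" for m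
    have nl: "(\<lambda>m. (real (n m) - real (N1 m)) / s1 m) \<longlonglongrightarrow> t"
      unfolding n_def by (rule floor_lim[OF s1_lim s1pos N1_over_s1])
    have ml: "(\<lambda>m. (real (T m - n m) - real (N2 m)) / s2 m) \<longlonglongrightarrow> - r * t" by (rule Tn_lim[OF nl])
    have tc2: "- r * t \<noteq> c2" using t rpos by (auto simp: field_simps)
    have l1: "(\<lambda>m. U1 m (n m)) \<longlonglongrightarrow> std_normal_density (t - \<beta>1)" by (rule U1_lim[OF nl])
    have l2: "(\<lambda>m. V1 m (n m)) \<longlonglongrightarrow> indicator {..c1} t"
      by (rule soft_cut[OF s1_lim s1pos nl b1_lim]) (use t V1_one V1_zero in auto)
    have l3: "(\<lambda>m. of_bool (n m \<le> T m) :: real) \<longlonglongrightarrow> 1"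
      using ev_le_T[OF nl] by (intro tendsto_eventually) (auto elim: eventually_mono)
    have l4: "(\<lambda>m. U2 m (T m - n m)) \<longlonglongrightarrow> std_normal_density (- r * t - \<beta>2)" by (rule U2_lim[OF ml])
    have l5: "(\<lambda>m. V2 m (T m - n m)) \<longlonglongrightarrow> indicator {..c2} (- r * t)"
      by (rule soft_cut[OF s2_lim s2pos ml b2_lim]) (use tc2 V2_one V2_zero in auto)
    show "(\<lambda>m. h m (nat \<lfloor>real (N1 m) + s1 m * t\<rfloor>)) \<longlonglongrightarrow> H t"
      unfolding h_def H_def n_def[symmetric] by (intro tendsto_mult l1 l2 l3 l4 l5)
  qed
  show ?thesis using lim unfolding eq H_def by simp
qed


definition "M1 m = N1 m + nat \<lfloor>k2 m\<rfloor>"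
definition "BB m = (\<Sum>n1\<le>T m. U1 m n1 * V1 m n1 * (1 - acut (k2 m) (N1 m) n1) * (\<Sum>n2<T m - n1. U2 m n2 * V2 m n2))"

lemma V1_acut: "V1 m n * (1 - acut (k2 m) (N1 m) n) = (if n = M1 m then 1 - frac (k2 m) else if n = Suc (M1 m) then frac (k2 m) else 0)"
  using k2b[of m] by (auto simp: V1_def M1_def cutw_explicit acut_nat)

lemma is0_1: "(\<lambda>m. 1 / s1 m) \<longlonglongrightarrow> 0"
  using tendsto_inverse_0_at_top[OF s1_lim] by (simp add: divide_inverse)
lemma is0_2: "(\<lambda>m. 1 / s2 m) \<longlonglongrightarrow> 0"
  using tendsto_inverse_0_at_top[OF s2_lim] by (simp add: divide_inverse)

lemma fk2_lim: "(\<lambda>m. real_of_int \<lfloor>k2 m\<rfloor> / s2 m) \<longlonglongrightarrow> \<gamma>2"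
  by (rule floor_div_lim[OF s2_lim s2pos]) (use k2lim in \<open>simp add: s2_def\<close>)

lemma ev_M1: "eventually (\<lambda>m. M1 m + 2 \<le> T m) sequentially"
proof -
  have "(\<lambda>m. - ((real_of_int \<lfloor>k2 m\<rfloor> + 2) / s2 m)) \<longlonglongrightarrow> - (\<gamma>2 + 2 * 0)"
    unfolding add_divide_distrib by (intro tendsto_minus tendsto_add fk2_lim) (use is0_2 tendsto_mult_right_zero[OF is0_2, of 2] in simp)
  then have "filterlim (\<lambda>m. - ((real_of_int \<lfloor>k2 m\<rfloor> + 2) / s2 m) + real (N2 m) / s2 m) at_top sequentially"
    by (rule filterlim_tendsto_add_at_top[OF _ N2_over_s2])
  then have "eventually (\<lambda>m. 0 \<le> - ((real_of_int \<lfloor>k2 m\<rfloor> + 2) / s2 m) + real (N2 m) / s2 m) sequentially"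
    by (rule filterlim_at_top[THEN iffD1, rule_format])
  then show ?thesis
  proof (rule eventually_mono)
    fix m assume "0 \<le> - ((real_of_int \<lfloor>k2 m\<rfloor> + 2) / s2 m) + real (N2 m) / s2 m"
    then have "0 \<le> (real (N2 m) - (real_of_int \<lfloor>k2 m\<rfloor> + 2)) / s2 m" by (simp add: diff_divide_distrib)
    then have "real_of_int \<lfloor>k2 m\<rfloor> + 2 \<le> real (N2 m)" using s2pos[of m] by (simp add: zero_le_divide_iff)
    moreover have "real (nat \<lfloor>k2 m\<rfloor>) = real_of_int \<lfloor>k2 m\<rfloor>" using k2b[of m] by simp
    ultimately have "real (nat \<lfloor>k2 m\<rfloor> + 2) \<le> real (N2 m)" by simp
    then have "nat \<lfloor>k2 m\<rfloor> + 2 \<le> N2 m" by (simp only: of_nat_le_iff)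
    then show "M1 m + 2 \<le> T m" by (simp add: M1_def T_def)
  qed
qed

lemma G_lim:
  fixes j :: nat
  assumes j: "j \<le> 1"
  shows "(\<lambda>m. (\<Sum>n2<T m - (M1 m + j). U2 m n2 * V2 m n2) / s2 m) \<longlonglongrightarrow> Phi (- \<gamma>2 - \<beta>2)"
proof -
  define b where "b m = T m - (M1 m + j) - 1" for m
  have bl: "(\<lambda>m. (real (b m) - real (N2 m)) / s2 m) \<longlonglongrightarrow> - \<gamma>2"
  proof -
    have "(\<lambda>m. - (real_of_int \<lfloor>k2 m\<rfloor> / s2 m) - (real j + 1) * (1 / s2 m)) \<longlonglongrightarrow> - \<gamma>2 - (real j + 1) * 0"
      by (intro tendsto_diff tendsto_minus tendsto_mult fk2_lim is0_2 tendsto_const)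
    moreover have "eventually (\<lambda>m. - (real_of_int \<lfloor>k2 m\<rfloor> / s2 m) - (real j + 1) * (1 / s2 m) = (real (b m) - real (N2 m)) / s2 m) sequentially"
      using ev_M1
    proof (rule eventually_mono)
      fix m assume h: "M1 m + 2 \<le> T m"
      have k: "real (nat \<lfloor>k2 m\<rfloor>) = real_of_int \<lfloor>k2 m\<rfloor>" using k2b[of m] by simp
      have "real (b m) = real (T m) - real (M1 m) - real j - 1" using h j by (simp add: b_def of_nat_diff)
      also have "\<dots> = real (N2 m) - real_of_int \<lfloor>k2 m\<rfloor> - real j - 1" by (simp add: T_def M1_def k)
      finally have "real (b m) - real (N2 m) = - real_of_int \<lfloor>k2 m\<rfloor> - (real j + 1)" by simp
      then show "- (real_of_int \<lfloor>k2 m\<rfloor> / s2 m) - (real j + 1) * (1 / s2 m) = (real (b m) - real (N2 m)) / s2 m"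
        by (simp add: diff_divide_distrib)
    qed
    ultimately show ?thesis by (simp add: Lim_transform_eventually)
  qed
  have eq: "eventually (\<lambda>m. (\<Sum>n2\<le>b m. U2 m n2 * V2 m n2) / s2 m = (\<Sum>n2<T m - (M1 m + j). U2 m n2 * V2 m n2) / s2 m) sequentially"
    using ev_M1
  proof (rule eventually_mono)
    fix m assume h: "M1 m + 2 \<le> T m"
    then have "T m - (M1 m + j) = Suc (b m)" using j by (simp add: b_def)
    then show "(\<Sum>n2\<le>b m. U2 m n2 * V2 m n2) / s2 m = (\<Sum>n2<T m - (M1 m + j). U2 m n2 * V2 m n2) / s2 m"
      by (simp add: lessThan_Suc_atMost)
  qed
  have "0 \<le> c2" unfolding c2_def using ga1 al1 al2 by simp
  then have c: "min c2 (- \<gamma>2) = - \<gamma>2"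
    using ga2 by (auto simp: min_def)
  show ?thesis
    using Lim_transform_eventually[OF inner_lim[OF bl] eq] unfolding c .
qed


lemma BB_lim: "(\<lambda>m. BB m / s2 m) \<longlonglongrightarrow> std_normal_density (c1 - \<beta>1) * Phi (- \<gamma>2 - \<beta>2)"
proof -
  define L where "L = std_normal_density (c1 - \<beta>1) * Phi (- \<gamma>2 - \<beta>2)"
  define F where "F m n1 = (\<Sum>n2<T m - n1. U2 m n2 * V2 m n2)" for m n1
  define f where "f m = frac (k2 m)" for m
  define X where "X m = U1 m (M1 m) * (F m (M1 m) / s2 m)" for m
  define Y where "Y m = U1 m (Suc (M1 m)) * (F m (Suc (M1 m)) / s2 m)" for m
  have Ml: "(\<lambda>m. (real (M1 m) - real (N1 m)) / s1 m) \<longlonglongrightarrow> c1"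
    using b1_lim by (simp add: b1_def M1_def)
  have Ml1: "(\<lambda>m. (real (Suc (M1 m)) - real (N1 m)) / s1 m) \<longlonglongrightarrow> c1"
  proof -
    have "(\<lambda>m. (real (M1 m) - real (N1 m)) / s1 m + 1 / s1 m) \<longlonglongrightarrow> c1 + 0" by (intro tendsto_add Ml is0_1)
    moreover have "(\<lambda>m. (real (M1 m) - real (N1 m)) / s1 m + 1 / s1 m) = (\<lambda>m. (real (Suc (M1 m)) - real (N1 m)) / s1 m)"
      by (rule ext) (simp add: add_divide_distrib[symmetric])
    ultimately show ?thesis by simp
  qed
  have g0: "(\<lambda>m. F m (M1 m) / s2 m) \<longlonglongrightarrow> Phi (- \<gamma>2 - \<beta>2)" using G_lim[of 0] by (simp add: F_def)
  have g1: "(\<lambda>m. F m (Suc (M1 m)) / s2 m) \<longlonglongrightarrow> Phi (- \<gamma>2 - \<beta>2)" using G_lim[of 1] by (simp add: F_def)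
  have X: "X \<longlonglongrightarrow> L" unfolding X_def L_def by (intro tendsto_mult U1_lim[OF Ml] g0)
  have Y: "Y \<longlonglongrightarrow> L" unfolding Y_def L_def by (intro tendsto_mult U1_lim[OF Ml1] g1)
  have f01: "0 \<le> f m" "f m \<le> 1" for m unfolding f_def by (simp_all add: frac_ge_0 less_imp_le[OF frac_lt_1])
  have YX: "(\<lambda>m. f m * (Y m - X m)) \<longlonglongrightarrow> 0"
  proof (rule Lim_null_comparison)
    show "eventually (\<lambda>m. norm (f m * (Y m - X m)) \<le> \<bar>Y m - X m\<bar>) sequentially"
    proof (rule always_eventually, rule allI)
      fix m
      have "f m * \<bar>Y m - X m\<bar> \<le> 1 * \<bar>Y m - X m\<bar>" using f01[of m] by (intro mult_right_mono) auto
      then show "norm (f m * (Y m - X m)) \<le> \<bar>Y m - X m\<bar>" using f01[of m] by (simp add: abs_mult)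
    qed
    show "(\<lambda>m. \<bar>Y m - X m\<bar>) \<longlonglongrightarrow> 0" using tendsto_rabs[OF tendsto_diff[OF Y X]] by simp
  qed
  have comb: "(\<lambda>m. X m + f m * (Y m - X m)) \<longlonglongrightarrow> L" using tendsto_add[OF X YX] by simp
  have ev: "eventually (\<lambda>m. X m + f m * (Y m - X m) = BB m / s2 m) sequentially"
    using ev_M1
  proof (rule eventually_mono)
    fix m assume h: "M1 m + 2 \<le> T m"
    have "BB m = (\<Sum>n1\<le>T m. (if n1 = M1 m then U1 m (M1 m) * (1 - f m) * F m (M1 m) else 0)
                        + (if n1 = Suc (M1 m) then U1 m (Suc (M1 m)) * f m * F m (Suc (M1 m)) else 0))"
      unfolding BB_def
    proof (rule sum.cong[OF refl])
      fix n1
      have "U1 m n1 * V1 m n1 * (1 - acut (k2 m) (N1 m) n1) * F m n1 = U1 m n1 * (V1 m n1 * (1 - acut (k2 m) (N1 m) n1)) * F m n1"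
        by (simp add: ac_simps)
      then show "U1 m n1 * V1 m n1 * (1 - acut (k2 m) (N1 m) n1) * (\<Sum>n2<T m - n1. U2 m n2 * V2 m n2) =
          (if n1 = M1 m then U1 m (M1 m) * (1 - f m) * F m (M1 m) else 0) + (if n1 = Suc (M1 m) then U1 m (Suc (M1 m)) * f m * F m (Suc (M1 m)) else 0)"
        unfolding V1_acut F_def[symmetric] f_def by auto
    qed
    also have "\<dots> = U1 m (M1 m) * (1 - f m) * F m (M1 m) + U1 m (Suc (M1 m)) * f m * F m (Suc (M1 m))"
      using h by (simp add: sum.distrib)
    finally show "X m + f m * (Y m - X m) = BB m / s2 m"
      unfolding X_def Y_def using s2pos[of m] by (simp add: field_simps)
  qed
  show ?thesis using Lim_transform_eventually[OF comb ev] unfolding L_def .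
qed

end

lemma Phi_alt: "Phi x = (LINT t|lborel. indicator {..x} t * std_normal_density t)"
  unfolding Phi_def set_lebesgue_integral_def by simp

lemma integrable_snd: "integrable lborel (\<lambda>t. indicator A t * std_normal_density t)" if "A \<in> sets borel"
  using integrable_snd_shift[of 0] that by (intro integrable_mult_indicator[where 'b=real, simplified]) auto

lemma Phi_pos: "0 < Phi x"
proof -
  define c where "c = std_normal_density (\<bar>x\<bar> + 1)"
  have cpos: "0 < c" by (simp add: c_def std_normal_density_def)
  have "(LINT t|lborel. indicator {x-1..x} t * c) \<le> (LINT t|lborel. indicator {..x} t * std_normal_density t)"
  proof (rule integral_mono)
    show "integrable lborel (\<lambda>t. indicator {x - 1..x} t * c)"
      by (intro integrable_mult_left integrable_real_indicator) auto
    show "integrable lborel (\<lambda>t. indicator {..x} t * std_normal_density t)" by (rule integrable_snd) auto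
    fix t
    show "indicator {x - 1..x} t * c \<le> indicator {..x} t * std_normal_density t"
    proof (cases "t \<in> {x-1..x}")
      case True
      then have "\<bar>t\<bar> \<le> \<bar>x\<bar> + 1" by auto
      then have "\<bar>t\<bar>\<^sup>2 \<le> (\<bar>x\<bar> + 1)\<^sup>2" by (rule power_mono) simp
      then have "t\<^sup>2 \<le> (\<bar>x\<bar> + 1)\<^sup>2" by simp
      then have "exp (- (\<bar>x\<bar> + 1)\<^sup>2 / 2) \<le> exp (- t\<^sup>2 / 2)" by simp
      then have "c \<le> std_normal_density t" unfolding c_def std_normal_density_def
        by (intro mult_left_mono) auto
      then show ?thesis using True by simp
    next
      case False
      then show ?thesis by (simp add: indicator_def normal_density_nonneg)
    qed
  qed
  moreover have "(LINT t|lborel. indicator {x-1..x} t * c) = c" by simp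
  ultimately show ?thesis using cpos Phi_alt[of x] by simp
qed


definition "PT = (LINT t|lborel. std_normal_density t)"

lemma Phi_nonneg: "0 \<le> Phi x" using Phi_pos[of x] by simp

lemma Phi_le: "Phi x \<le> PT"
  unfolding Phi_alt PT_def
proof (rule integral_mono)
  show "integrable lborel (\<lambda>t. indicator {..x} t * std_normal_density t)" by (rule integrable_snd) auto
  show "integrable lborel (\<lambda>t. std_normal_density t)" using integrable_snd_shift[of 0] by simp
  show "indicator {..x} t * std_normal_density t \<le> std_normal_density t" for t
    by (simp add: indicator_def normal_density_nonneg)
qed

lemma Phi_integral_lt: "(LINT y|lborel. std_normal_density (y - \<beta>) * indicator {..<b} y) = Phi (b - \<beta>)"
proof -
  have "(LINT y|lborel. std_normal_density (y - \<beta>) * indicator {..<b} y) = (LINT y|lborel. std_normal_density (y - \<beta>) * indicator {..b} y)"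
  proof (rule integral_cong_AE)
    show "(\<lambda>y. std_normal_density (y - \<beta>) * indicator {..<b} y) \<in> borel_measurable lborel" by measurable
    show "(\<lambda>y. std_normal_density (y - \<beta>) * indicator {..b} y) \<in> borel_measurable lborel" by measurable
    have "AE y in lborel. y \<notin> {b}" by (rule AE_not_in) (rule finite_imp_null_set_lborel, simp)
    then show "AE y in lborel. std_normal_density (y - \<beta>) * indicator {..<b} y = std_normal_density (y - \<beta>) * indicator {..b} y"
      by eventually_elim (auto simp: indicator_def)
  qed
  then show ?thesis using Phi_integral by simp
qed

lemma subst_sqrt:
  fixes g :: "real \<Rightarrow> real"
  assumes "0 < a"
  shows "(LINT t|lborel. g t) = (1 / sqrt a) * (LINT x|lborel. g (x / sqrt a))"
  using lborel_integral_real_affine[of "1 / sqrt a" g 0] assms by simp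

context twop
begin

lemma c2_eq: "c2 = r * \<gamma>1" by (simp add: c2_def r_def)

lemma LZ_eq:
  "(LINT t|lborel. std_normal_density (t - \<beta>1) * indicator {..c1} t * Phi (min c2 (- r * t) - \<beta>2))
   = Phi (\<gamma>1 * sqrt (\<alpha>1 / \<alpha>2) - \<beta>2) * Phi (- \<gamma>1 - \<beta>1)
     + (LBINT x:{- \<gamma>1 * sqrt \<alpha>1 .. \<gamma>2 * sqrt \<alpha>2}.
          std_normal_density (x / sqrt \<alpha>1 - \<beta>1) * Phi (- x / sqrt \<alpha>2 - \<beta>2)) / sqrt \<alpha>1"
proof -
  define A where "A t = std_normal_density (t - \<beta>1) * indicator {..<- \<gamma>1} t * Phi (c2 - \<beta>2)" for t
  define B where "B t = std_normal_density (t - \<beta>1) * indicator {- \<gamma>1..c1} t * Phi (- r * t - \<beta>2)" for t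
  have c1nn: "0 \<le> c1" unfolding c1_def using ga2 al1 al2 by simp
  have split: "std_normal_density (t - \<beta>1) * indicator {..c1} t * Phi (min c2 (- r * t) - \<beta>2) = A t + B t" for t
  proof (cases "t < - \<gamma>1")
    case True
    then have "\<gamma>1 \<le> - t" by simp
    then have "r * \<gamma>1 \<le> r * (- t)" using rpos by (intro mult_left_mono) auto
    then have "c2 \<le> - r * t" unfolding c2_eq by simp
    moreover have "t \<le> c1" using True c1nn ga1 by simp
    ultimately show ?thesis using True by (simp add: A_def B_def indicator_def min_def)
  next
    case False
    show ?thesis
    proof (cases "t \<le> c1")
      case True
      have "- t \<le> \<gamma>1" using False by simp
      then have "r * (- t) \<le> r * \<gamma>1" using rpos by (intro mult_left_mono) auto
      then have "- r * t \<le> c2" unfolding c2_eq by simp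
      then show ?thesis using True False by (simp add: A_def B_def indicator_def min_def)
    next
      case False2: False
      then show ?thesis using False by (simp add: A_def B_def indicator_def)
    qed
  qed
  have bnd: "integrable lborel (\<lambda>t. PT * std_normal_density (t - \<beta>1))"
    using integrable_snd_shift[of \<beta>1] by simp
  have intA: "integrable lborel A"
  proof (rule Bochner_Integration.integrable_bound[OF bnd])
    show "A \<in> borel_measurable lborel" unfolding A_def by measurable
    show "AE t in lborel. norm (A t) \<le> norm (PT * std_normal_density (t - \<beta>1))"
    proof (rule AE_I2)
      fix t
      have "std_normal_density (t - \<beta>1) * Phi (c2 - \<beta>2) \<le> std_normal_density (t - \<beta>1) * PT"
        using Phi_le[of "c2 - \<beta>2"] by (intro mult_left_mono) (auto simp: normal_density_nonneg)
      then show "norm (A t) \<le> norm (PT * std_normal_density (t - \<beta>1))"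
        using Phi_le[of "c2 - \<beta>2"] Phi_nonneg[of "c2 - \<beta>2"]
        by (auto simp: A_def indicator_def abs_mult normal_density_nonneg mult.commute)
    qed
  qed
  have intB: "integrable lborel B"
  proof (rule Bochner_Integration.integrable_bound[OF bnd])
    show "B \<in> borel_measurable lborel" unfolding B_def by measurable
    show "AE t in lborel. norm (B t) \<le> norm (PT * std_normal_density (t - \<beta>1))"
    proof (rule AE_I2)
      fix t
      have "std_normal_density (t - \<beta>1) * Phi (- (r * t) - \<beta>2) \<le> std_normal_density (t - \<beta>1) * PT"
        using Phi_le[of "- (r * t) - \<beta>2"] by (intro mult_left_mono) (auto simp: normal_density_nonneg)
      moreover have "0 \<le> PT" using Phi_le[of 0] Phi_nonneg[of 0] by simp
      ultimately show "norm (B t) \<le> norm (PT * std_normal_density (t - \<beta>1))"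
        using Phi_nonneg[of "- (r * t) - \<beta>2"]
        by (auto simp: B_def indicator_def abs_mult normal_density_nonneg mult.commute)
    qed
  qed
  have iA: "(LINT t|lborel. A t) = Phi (c2 - \<beta>2) * Phi (- \<gamma>1 - \<beta>1)"
    unfolding A_def using Phi_integral_lt[of \<beta>1 "- \<gamma>1"] by (simp add: mult.commute)
  have iB: "(LINT t|lborel. B t) = (LBINT x:{- \<gamma>1 * sqrt \<alpha>1 .. \<gamma>2 * sqrt \<alpha>2}.
          std_normal_density (x / sqrt \<alpha>1 - \<beta>1) * Phi (- x / sqrt \<alpha>2 - \<beta>2)) / sqrt \<alpha>1"
  proof -
    have "(LINT t|lborel. B t) = (1 / sqrt \<alpha>1) * (LINT x|lborel. B (x / sqrt \<alpha>1))"
      by (rule subst_sqrt[OF al1])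
    also have "(\<lambda>x. B (x / sqrt \<alpha>1)) = (\<lambda>x. indicator {- \<gamma>1 * sqrt \<alpha>1 .. \<gamma>2 * sqrt \<alpha>2} x *\<^sub>R
          (std_normal_density (x / sqrt \<alpha>1 - \<beta>1) * Phi (- x / sqrt \<alpha>2 - \<beta>2)))"
    proof (rule ext)
      fix x
      have sa: "0 < sqrt \<alpha>1" "0 < sqrt \<alpha>2" using al1 al2 by auto
      have i: "indicator {- \<gamma>1..c1} (x / sqrt \<alpha>1) = (indicator {- \<gamma>1 * sqrt \<alpha>1 .. \<gamma>2 * sqrt \<alpha>2} x :: real)"
      proof -
        have "c1 * sqrt \<alpha>1 = \<gamma>2 * sqrt \<alpha>2" unfolding c1_def using al1 al2 by (simp add: real_sqrt_divide)
        then have "(- \<gamma>1 \<le> x / sqrt \<alpha>1 \<and> x / sqrt \<alpha>1 \<le> c1) \<longleftrightarrow> (- \<gamma>1 * sqrt \<alpha>1 \<le> x \<and> x \<le> \<gamma>2 * sqrt \<alpha>2)"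
          using sa by (auto simp: pos_le_divide_eq pos_divide_le_eq)
        then show ?thesis by (simp add: indicator_def)
      qed
      have rr: "- r * (x / sqrt \<alpha>1) = - x / sqrt \<alpha>2"
        unfolding r_def using al1 al2 by (simp add: real_sqrt_divide)
      show "B (x / sqrt \<alpha>1) = indicator {- \<gamma>1 * sqrt \<alpha>1 .. \<gamma>2 * sqrt \<alpha>2} x *\<^sub>R
          (std_normal_density (x / sqrt \<alpha>1 - \<beta>1) * Phi (- x / sqrt \<alpha>2 - \<beta>2))"
        unfolding B_def i rr by simp
    qed
    finally show ?thesis unfolding set_lebesgue_integral_def by simp
  qed
  have "(LINT t|lborel. std_normal_density (t - \<beta>1) * indicator {..c1} t * Phi (min c2 (- r * t) - \<beta>2))
      = (LINT t|lborel. A t + B t)" unfolding split ..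
  also have "\<dots> = (LINT t|lborel. A t) + (LINT t|lborel. B t)" by (rule Bochner_Integration.integral_add[OF intA intB])
  finally show ?thesis unfolding iA iB c2_def by simp
qed

end


context twop
begin

definition "II = (LBINT x:{- \<gamma>1 * sqrt \<alpha>1 .. \<gamma>2 * sqrt \<alpha>2}.
                std_normal_density (x / sqrt \<alpha>1 - \<beta>1) * std_normal_density (- x / sqrt \<alpha>2 - \<beta>2))"
definition "AA1 = std_normal_density (\<gamma>2 * sqrt (\<alpha>2 / \<alpha>1) - \<beta>1) / sqrt \<alpha>1 * Phi (- \<gamma>2 - \<beta>2)
              + II / sqrt (\<alpha>1 * \<alpha>2)"
definition "GG = Phi (\<gamma>1 * sqrt (\<alpha>1 / \<alpha>2) - \<beta>2) * Phi (- \<gamma>1 - \<beta>1)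
             + (LBINT x:{- \<gamma>1 * sqrt \<alpha>1 .. \<gamma>2 * sqrt \<alpha>2}.
                  std_normal_density (x / sqrt \<alpha>1 - \<beta>1) * Phi (- x / sqrt \<alpha>2 - \<beta>2)) / sqrt \<alpha>1"

lemma LLim_eq:
  "sqrt \<alpha>1 * (LINT t|lborel. std_normal_density (t - \<beta>1) * indicator {..c1} t * (std_normal_density (- r * t - \<beta>2) * indicator {..c2} (- r * t))) = II"
proof -
  define B where "B t = std_normal_density (t - \<beta>1) * indicator {- \<gamma>1..c1} t * std_normal_density (- r * t - \<beta>2)" for t
  have pw: "std_normal_density (t - \<beta>1) * indicator {..c1} t * (std_normal_density (- r * t - \<beta>2) * indicator {..c2} (- r * t)) = B t" for t
  proof -
    have "(- r * t \<le> c2) \<longleftrightarrow> (- \<gamma>1 \<le> t)"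
    proof
      assume "- r * t \<le> c2"
      then have "r * (- t) \<le> r * \<gamma>1" unfolding c2_eq by simp
      then have "- t \<le> \<gamma>1" using rpos by (simp only: mult_le_cancel_left_pos)
      then show "- \<gamma>1 \<le> t" by simp
    next
      assume "- \<gamma>1 \<le> t"
      then have "r * (- t) \<le> r * \<gamma>1" using rpos by (intro mult_left_mono) auto
      then show "- r * t \<le> c2" unfolding c2_eq by simp
    qed
    then show ?thesis by (auto simp: B_def indicator_def)
  qed
  have "(LINT t|lborel. B t) = (1 / sqrt \<alpha>1) * (LINT x|lborel. B (x / sqrt \<alpha>1))"
    by (rule subst_sqrt[OF al1])
  also have "(\<lambda>x. B (x / sqrt \<alpha>1)) = (\<lambda>x. indicator {- \<gamma>1 * sqrt \<alpha>1 .. \<gamma>2 * sqrt \<alpha>2} x *\<^sub>R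
        (std_normal_density (x / sqrt \<alpha>1 - \<beta>1) * std_normal_density (- x / sqrt \<alpha>2 - \<beta>2)))"
  proof (rule ext)
    fix x
    have sa: "0 < sqrt \<alpha>1" "0 < sqrt \<alpha>2" using al1 al2 by auto
    have i: "indicator {- \<gamma>1..c1} (x / sqrt \<alpha>1) = (indicator {- \<gamma>1 * sqrt \<alpha>1 .. \<gamma>2 * sqrt \<alpha>2} x :: real)"
    proof -
      have "c1 * sqrt \<alpha>1 = \<gamma>2 * sqrt \<alpha>2" unfolding c1_def using al1 al2 by (simp add: real_sqrt_divide)
      then have "(- \<gamma>1 \<le> x / sqrt \<alpha>1 \<and> x / sqrt \<alpha>1 \<le> c1) \<longleftrightarrow> (- \<gamma>1 * sqrt \<alpha>1 \<le> x \<and> x \<le> \<gamma>2 * sqrt \<alpha>2)"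
        using sa by (auto simp: pos_le_divide_eq pos_divide_le_eq)
      then show ?thesis by (simp add: indicator_def)
    qed
    have rr: "- r * (x / sqrt \<alpha>1) = - x / sqrt \<alpha>2"
      unfolding r_def using al1 al2 by (simp add: real_sqrt_divide)
    show "B (x / sqrt \<alpha>1) = indicator {- \<gamma>1 * sqrt \<alpha>1 .. \<gamma>2 * sqrt \<alpha>2} x *\<^sub>R
        (std_normal_density (x / sqrt \<alpha>1 - \<beta>1) * std_normal_density (- x / sqrt \<alpha>2 - \<beta>2))"
      unfolding B_def i rr by simp
  qed
  finally have "(LINT t|lborel. B t) = (1 / sqrt \<alpha>1) * II" unfolding II_def set_lebesgue_integral_def by simp
  then show ?thesis unfolding pw using al1 by simp
qed

lemma GG_pos: "0 < GG"
proof -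
  have "0 \<le> (LBINT x:{- \<gamma>1 * sqrt \<alpha>1 .. \<gamma>2 * sqrt \<alpha>2}.
                  std_normal_density (x / sqrt \<alpha>1 - \<beta>1) * Phi (- x / sqrt \<alpha>2 - \<beta>2))"
    unfolding set_lebesgue_integral_def
    by (rule integral_nonneg_AE) (auto simp: indicator_def normal_density_nonneg Phi_nonneg)
  then show ?thesis unfolding GG_def using Phi_pos al1
    by (intro add_pos_nonneg mult_pos_pos divide_nonneg_pos) auto
qed

lemma AA1_pos: "0 < AA1"
proof -
  have "0 \<le> II" unfolding II_def set_lebesgue_integral_def
    by (rule integral_nonneg_AE) (auto simp: indicator_def normal_density_nonneg)
  moreover have "0 < std_normal_density (\<gamma>2 * sqrt (\<alpha>2 / \<alpha>1) - \<beta>1)" by (simp add: std_normal_density_def)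
  ultimately show ?thesis unfolding AA1_def using Phi_pos al1 al2
    by (intro add_pos_nonneg mult_pos_pos divide_pos_pos divide_nonneg_pos) auto
qed

lemma main_lim: "(\<lambda>m. sqrt (N m) * ((LL m + BB m) / ZZ m)) \<longlonglongrightarrow> AA1 / GG"
proof -
  have z: "(\<lambda>m. ZZ m / (s1 m * s2 m)) \<longlonglongrightarrow> GG" using ZZ_lim LZ_eq by (simp add: GG_def)
  have l: "(\<lambda>m. LL m / s1 m) \<longlonglongrightarrow> II / sqrt \<alpha>1"
  proof -
    have "II / sqrt \<alpha>1 = (LINT t|lborel. std_normal_density (t - \<beta>1) * indicator {..c1} t * (std_normal_density (- r * t - \<beta>2) * indicator {..c2} (- r * t)))"
      using LLim_eq[symmetric] al1 by simp
    then show ?thesis using LL_lim by simp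
  qed
  have b: "(\<lambda>m. BB m / s2 m) \<longlonglongrightarrow> std_normal_density (c1 - \<beta>1) * Phi (- \<gamma>2 - \<beta>2)" by (rule BB_lim)
  have lim: "(\<lambda>m. (LL m / s1 m * sqrt \<alpha>1 + BB m / s2 m * sqrt \<alpha>2) / (ZZ m / (s1 m * s2 m) * (sqrt \<alpha>1 * sqrt \<alpha>2)))
      \<longlonglongrightarrow> (II / sqrt \<alpha>1 * sqrt \<alpha>1 + std_normal_density (c1 - \<beta>1) * Phi (- \<gamma>2 - \<beta>2) * sqrt \<alpha>2) / (GG * (sqrt \<alpha>1 * sqrt \<alpha>2))"
    using GG_pos al1 al2 by (intro tendsto_intros l b z) auto
  have eq: "(LL m / s1 m * sqrt \<alpha>1 + BB m / s2 m * sqrt \<alpha>2) / (ZZ m / (s1 m * s2 m) * (sqrt \<alpha>1 * sqrt \<alpha>2))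
      = sqrt (N m) * ((LL m + BB m) / ZZ m)" for m
  proof -
    have sN: "0 < sqrt (N m)" using Npos[of m] by simp
    have a: "0 < sqrt \<alpha>1" "0 < sqrt \<alpha>2" using al1 al2 by auto
    define q where "q = sqrt (N m)"
    have q: "0 < q" using sN by (simp add: q_def)
    show ?thesis unfolding s1_sqrtN s2_sqrtN q_def[symmetric] using q a
      by (cases "ZZ m = 0") (simp_all add: field_simps)
  qed
  have val: "(II / sqrt \<alpha>1 * sqrt \<alpha>1 + std_normal_density (c1 - \<beta>1) * Phi (- \<gamma>2 - \<beta>2) * sqrt \<alpha>2) / (GG * (sqrt \<alpha>1 * sqrt \<alpha>2))
      = AA1 / GG"
    unfolding AA1_def c1_def using al1 al2 GG_pos by (simp add: field_simps real_sqrt_mult)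
  show ?thesis using lim unfolding eq val .
qed

end


lemma tri_swap:
  fixes f g :: "nat \<Rightarrow> real"
  shows "(\<Sum>a\<le>T. g a * (\<Sum>b\<le>T-a. f b)) = (\<Sum>b\<le>T. f b * (\<Sum>a\<le>T-b. g a))"
proof -
  have "(\<Sum>a\<le>T. g a * (\<Sum>b\<le>T-a. f b)) = (\<Sum>(a,b)\<in>Sigma {..T} (\<lambda>a. {..T-a}). g a * f b)"
    by (simp only: sum_distrib_left) (rule sum.Sigma; auto)
  also have "Sigma {..T} (\<lambda>a. {..T-a}) = prod.swap ` Sigma {..T} (\<lambda>b. {..T-b})"
    by (auto simp: image_iff)
  also have "(\<Sum>(a,b)\<in>prod.swap ` Sigma {..T} (\<lambda>b. {..T-b}). g a * f b) = (\<Sum>(b,a)\<in>Sigma {..T} (\<lambda>b. {..T-b}). g a * f b)"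
    by (subst sum.reindex) (auto simp: case_prod_beta)
  also have "\<dots> = (\<Sum>(b,a)\<in>Sigma {..T} (\<lambda>b. {..T-b}). f b * g a)"
    by (rule sum.cong) (auto simp: mult.commute)
  also have "\<dots> = (\<Sum>b\<le>T. f b * (\<Sum>a\<le>T-b. g a))"
    by (simp only: sum_distrib_left) (rule sum.Sigma[symmetric]; auto)
  finally show ?thesis .
qed

lemma reflect_set_integral:
  fixes F :: "real \<Rightarrow> real"
  shows "(LBINT x:{a..b}. F x) = (LBINT x:{-b..-a}. F (- x))"
proof -
  have "(LINT x|lborel. indicator {a..b} x *\<^sub>R F x) = (LINT x|lborel. indicator {a..b} (- x) *\<^sub>R F (- x))"
    using lborel_integral_real_affine[of "-1" "\<lambda>x. indicator {a..b} x *\<^sub>R F x" 0] by simp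
  moreover have "indicator {a..b} (- x) = (indicator {-b..-a} x :: real)" for x by (auto simp: indicator_def)
  ultimately show ?thesis unfolding set_lebesgue_integral_def by simp
qed

context twop
begin

lemma rho_U1: "rho (a1 m) (k2 m) (N1 m) n = (exp (Lu (a1 m) (N1 m)) * K1) * (U1 m n * V1 m n)"
proof -
  have K: "K1 \<noteq> 0" by (simp add: K1_def)
  have "rho (a1 m) (k2 m) (N1 m) n = exp (Lu (a1 m) n) * V1 m n"
    by (simp add: rho_def V1_def exp_Lu[OF a1pos])
  also have "exp (Lu (a1 m) n) = exp (Lu (a1 m) (N1 m)) * K1 * U1 m n"
    using K by (simp add: U1_def exp_diff)
  finally show ?thesis by (simp add: ac_simps)
qed

lemma rho_U2: "rho (a2 m) (k1 m) (N2 m) n = (exp (Lu (a2 m) (N2 m)) * K2) * (U2 m n * V2 m n)"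
proof -
  have K: "K2 \<noteq> 0" by (simp add: K2_def)
  have "rho (a2 m) (k1 m) (N2 m) n = exp (Lu (a2 m) n) * V2 m n"
    by (simp add: rho_def V2_def exp_Lu[OF a2pos])
  also have "exp (Lu (a2 m) n) = exp (Lu (a2 m) (N2 m)) * K2 * U2 m n"
    using K by (simp add: U2_def exp_diff)
  finally show ?thesis by (simp add: ac_simps)
qed

lemma ratio_eq:
  "(\<Sum>a\<le>N1 m + N2 m. rho (a1 m) (k2 m) (N1 m) a * (rho (a2 m) (k1 m) (N2 m) (N1 m + N2 m - a)
       + (1 - acut (k2 m) (N1 m) a) * (\<Sum>b<N1 m + N2 m - a. rho (a2 m) (k1 m) (N2 m) b)))
   / (\<Sum>a\<le>N1 m + N2 m. rho (a1 m) (k2 m) (N1 m) a * (\<Sum>b\<le>N1 m + N2 m - a. rho (a2 m) (k1 m) (N2 m) b))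
   = (LL m + BB m) / ZZ m"
proof -
  define E where "E = (exp (Lu (a1 m) (N1 m)) * K1) * (exp (Lu (a2 m) (N2 m)) * K2)"
  have E: "E \<noteq> 0" by (simp add: E_def K1_def K2_def)
  have num: "(\<Sum>a\<le>N1 m + N2 m. rho (a1 m) (k2 m) (N1 m) a * (rho (a2 m) (k1 m) (N2 m) (N1 m + N2 m - a)
       + (1 - acut (k2 m) (N1 m) a) * (\<Sum>b<N1 m + N2 m - a. rho (a2 m) (k1 m) (N2 m) b))) = E * (LL m + BB m)"
  proof -
    have sm: "(\<Sum>b<c. rho (a2 m) (k1 m) (N2 m) b) = (exp (Lu (a2 m) (N2 m)) * K2) * (\<Sum>b<c. U2 m b * V2 m b)" for c
      by (simp add: rho_U2 sum_distrib_left)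
    have "(\<Sum>a\<le>N1 m + N2 m. rho (a1 m) (k2 m) (N1 m) a * (rho (a2 m) (k1 m) (N2 m) (N1 m + N2 m - a)
       + (1 - acut (k2 m) (N1 m) a) * (\<Sum>b<N1 m + N2 m - a. rho (a2 m) (k1 m) (N2 m) b)))
       = (\<Sum>a\<le>N1 m + N2 m. E * (U1 m a * V1 m a * (U2 m (N1 m + N2 m - a) * V2 m (N1 m + N2 m - a))
            + U1 m a * V1 m a * (1 - acut (k2 m) (N1 m) a) * (\<Sum>b<N1 m + N2 m - a. U2 m b * V2 m b)))"
      by (rule sum.cong[OF refl]) (simp only: sm, simp only: rho_U1 rho_U2 E_def, simp add: algebra_simps)
    also have "\<dots> = E * (LL m + BB m)"
      unfolding LL_def BB_def T_def by (simp add: sum_distrib_left[symmetric] sum.distrib)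
    finally show ?thesis .
  qed
  have den: "(\<Sum>a\<le>N1 m + N2 m. rho (a1 m) (k2 m) (N1 m) a * (\<Sum>b\<le>N1 m + N2 m - a. rho (a2 m) (k1 m) (N2 m) b)) = E * ZZ m"
  proof -
    have sm: "(\<Sum>b\<le>c. rho (a2 m) (k1 m) (N2 m) b) = (exp (Lu (a2 m) (N2 m)) * K2) * (\<Sum>b\<le>c. U2 m b * V2 m b)" for c
      by (simp add: rho_U2 sum_distrib_left)
    have "(\<Sum>a\<le>N1 m + N2 m. rho (a1 m) (k2 m) (N1 m) a * (\<Sum>b\<le>N1 m + N2 m - a. rho (a2 m) (k1 m) (N2 m) b))
       = (\<Sum>a\<le>N1 m + N2 m. E * (U1 m a * V1 m a * (\<Sum>b\<le>N1 m + N2 m - a. U2 m b * V2 m b)))"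
      by (rule sum.cong[OF refl]) (simp only: sm, simp only: rho_U1 E_def, simp add: algebra_simps)
    also have "\<dots> = E * ZZ m"
      unfolding ZZ_def T_def by (simp add: sum_distrib_left[symmetric])
    finally show ?thesis .
  qed
  show ?thesis unfolding num den using E by simp
qed

end

theorem theorem4:
  fixes \<alpha>1 \<alpha>2 \<beta>1 \<beta>2 \<gamma>1 \<gamma>2 :: real
    and N :: "nat \<Rightarrow> real"
    and N1 N2 :: "nat \<Rightarrow> nat"
    and k1 k2 l1 l2 u1 u2 :: "nat \<Rightarrow> real"
  assumes "\<alpha>1 > 0" "\<alpha>2 > 0" "\<gamma>1 \<ge> 0" "\<gamma>2 \<ge> 0"
    and "filterlim N at_top sequentially"
    and "\<And>m. N1 m > 0" "\<And>m. N2 m > 0"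
    and "\<And>m. real (N1 m) = \<alpha>1 * N m" "\<And>m. real (N2 m) = \<alpha>2 * N m"
    and "\<And>m. l1 m > 0" "\<And>m. l2 m > 0" "\<And>m. u1 m > 0" "\<And>m. u2 m > 0"
    and "\<And>m. 0 \<le> k1 m \<and> k1 m \<le> real (N1 m)"
    and "\<And>m. 0 \<le> k2 m \<and> k2 m \<le> real (N2 m)"
    and "(\<lambda>m. l1 m / u1 m - real (N1 m) - \<beta>1 * sqrt (real (N1 m))) \<in> o(\<lambda>m. sqrt (real (N1 m)))"
    and "(\<lambda>m. l2 m / u2 m - real (N2 m) - \<beta>2 * sqrt (real (N2 m))) \<in> o(\<lambda>m. sqrt (real (N2 m)))"
    and "(\<lambda>m. k1 m - \<gamma>1 * sqrt (real (N1 m))) \<in> o(\<lambda>m. sqrt (real (N1 m)))"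
    and "(\<lambda>m. k2 m - \<gamma>2 * sqrt (real (N2 m))) \<in> o(\<lambda>m. sqrt (real (N2 m)))"
  shows
    "let I = (LBINT x:{- \<gamma>1 * sqrt \<alpha>1 .. \<gamma>2 * sqrt \<alpha>2}.
                std_normal_density (x / sqrt \<alpha>1 - \<beta>1) * std_normal_density (- x / sqrt \<alpha>2 - \<beta>2));
         A1 = std_normal_density (\<gamma>2 * sqrt (\<alpha>2 / \<alpha>1) - \<beta>1) / sqrt \<alpha>1 * Phi (- \<gamma>2 - \<beta>2)
              + I / sqrt (\<alpha>1 * \<alpha>2);
         A2 = std_normal_density (\<gamma>1 * sqrt (\<alpha>1 / \<alpha>2) - \<beta>2) / sqrt \<alpha>2 * Phi (- \<gamma>1 - \<beta>1)
              + I / sqrt (\<alpha>1 * \<alpha>2);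
         G = Phi (\<gamma>1 * sqrt (\<alpha>1 / \<alpha>2) - \<beta>2) * Phi (- \<gamma>1 - \<beta>1)
             + (LBINT x:{- \<gamma>1 * sqrt \<alpha>1 .. \<gamma>2 * sqrt \<alpha>2}.
                  std_normal_density (x / sqrt \<alpha>1 - \<beta>1) * Phi (- x / sqrt \<alpha>2 - \<beta>2)) / sqrt \<alpha>1
     in (\<lambda>m. B1_bo (N1 m) (N2 m) (k1 m) (k2 m) (l1 m) (l2 m) (u1 m) (u2 m))
          \<sim>[sequentially] (\<lambda>m. 1 / sqrt (N m) * (A1 / G))
      \<and> (\<lambda>m. B2_bo (N1 m) (N2 m) (k1 m) (k2 m) (l1 m) (l2 m) (u1 m) (u2 m))
          \<sim>[sequentially] (\<lambda>m. 1 / sqrt (N m) * (A2 / G))"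
proof -
  have sN1: "0 < sqrt (real (N1 m))" for m using assms(6)[of m] by simp
  have sN2: "0 < sqrt (real (N2 m))" for m using assms(7)[of m] by simp
  have a1lim: "(\<lambda>m. (l1 m / u1 m - real (N1 m)) / sqrt (real (N1 m))) \<longlonglongrightarrow> \<beta>1"
  proof -
    have "(\<lambda>m. (l1 m / u1 m - real (N1 m) - \<beta>1 * sqrt (real (N1 m))) / sqrt (real (N1 m)) + \<beta>1) \<longlonglongrightarrow> 0 + \<beta>1"
      by (intro tendsto_add smalloD_tendsto[OF assms(16)] tendsto_const)
    moreover have "(l1 m / u1 m - real (N1 m) - \<beta>1 * sqrt (real (N1 m))) / sqrt (real (N1 m)) + \<beta>1
        = (l1 m / u1 m - real (N1 m)) / sqrt (real (N1 m))" for m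
      using sN1[of m] by (simp add: field_simps)
    ultimately show ?thesis by simp
  qed
  have a2lim: "(\<lambda>m. (l2 m / u2 m - real (N2 m)) / sqrt (real (N2 m))) \<longlonglongrightarrow> \<beta>2"
  proof -
    have "(\<lambda>m. (l2 m / u2 m - real (N2 m) - \<beta>2 * sqrt (real (N2 m))) / sqrt (real (N2 m)) + \<beta>2) \<longlonglongrightarrow> 0 + \<beta>2"
      by (intro tendsto_add smalloD_tendsto[OF assms(17)] tendsto_const)
    moreover have "(l2 m / u2 m - real (N2 m) - \<beta>2 * sqrt (real (N2 m))) / sqrt (real (N2 m)) + \<beta>2
        = (l2 m / u2 m - real (N2 m)) / sqrt (real (N2 m))" for m
      using sN2[of m] by (simp add: field_simps)
    ultimately show ?thesis by simp
  qed
  have k1lim: "(\<lambda>m. k1 m / sqrt (real (N1 m))) \<longlonglongrightarrow> \<gamma>1"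
  proof -
    have "(\<lambda>m. (k1 m - \<gamma>1 * sqrt (real (N1 m))) / sqrt (real (N1 m)) + \<gamma>1) \<longlonglongrightarrow> 0 + \<gamma>1"
      by (intro tendsto_add smalloD_tendsto[OF assms(18)] tendsto_const)
    moreover have "(k1 m - \<gamma>1 * sqrt (real (N1 m))) / sqrt (real (N1 m)) + \<gamma>1 = k1 m / sqrt (real (N1 m))" for m
      using sN1[of m] by (simp add: field_simps)
    ultimately show ?thesis by simp
  qed
  have k2lim: "(\<lambda>m. k2 m / sqrt (real (N2 m))) \<longlonglongrightarrow> \<gamma>2"
  proof -
    have "(\<lambda>m. (k2 m - \<gamma>2 * sqrt (real (N2 m))) / sqrt (real (N2 m)) + \<gamma>2) \<longlonglongrightarrow> 0 + \<gamma>2"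
      by (intro tendsto_add smalloD_tendsto[OF assms(19)] tendsto_const)
    moreover have "(k2 m - \<gamma>2 * sqrt (real (N2 m))) / sqrt (real (N2 m)) + \<gamma>2 = k2 m / sqrt (real (N2 m))" for m
      using sN2[of m] by (simp add: field_simps)
    ultimately show ?thesis by simp
  qed
  interpret t: twop \<alpha>1 \<alpha>2 \<beta>1 \<beta>2 \<gamma>1 \<gamma>2 N N1 N2 k1 k2 "\<lambda>m. l1 m / u1 m" "\<lambda>m. l2 m / u2 m"
    by unfold_locales (use assms a1lim a2lim k1lim k2lim in auto)
  interpret sw: twop \<alpha>2 \<alpha>1 \<beta>2 \<beta>1 \<gamma>2 \<gamma>1 N N2 N1 k2 k1 "\<lambda>m. l2 m / u2 m" "\<lambda>m. l1 m / u1 m"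
    by unfold_locales (use assms a1lim a2lim k1lim k2lim in auto)
  have pos: "0 < l1 m" "0 < l2 m" "0 < u1 m" "0 < u2 m" "0 \<le> k1 m" "0 \<le> k2 m" for m
    using assms(10-15) by auto
  have B1eq: "B1_bo (N1 m) (N2 m) (k1 m) (k2 m) (l1 m) (l2 m) (u1 m) (u2 m) = (t.LL m + t.BB m) / t.ZZ m" for m
    unfolding B1_formula[OF pos[of m]] t.ratio_eq[of m, symmetric] ..
  have B2eq: "B2_bo (N1 m) (N2 m) (k1 m) (k2 m) (l1 m) (l2 m) (u1 m) (u2 m) = (sw.LL m + sw.BB m) / sw.ZZ m" for m
    unfolding B2_formula[OF pos[of m]] sw.ratio_eq[of m, symmetric] by (simp add: add.commute)
  have U: "sw.U1 = t.U2" "sw.U2 = t.U1" "sw.V1 = t.V2" "sw.V2 = t.V1" "sw.T = t.T" "sw.s1 = t.s2" "sw.s2 = t.s1"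
    by (auto simp: fun_eq_iff sw.U1_def t.U2_def sw.K1_def t.K2_def sw.U2_def t.U1_def sw.K2_def t.K1_def
        sw.V1_def t.V2_def sw.V2_def t.V1_def sw.T_def t.T_def sw.s1_def t.s2_def sw.s2_def t.s1_def)
  have ZZeq: "sw.ZZ m = t.ZZ m" for m
    unfolding sw.ZZ_def t.ZZ_def U using tri_swap[where g = "\<lambda>a. t.U2 m a * t.V2 m a" and T = "t.T m" and f = "\<lambda>a. t.U1 m a * t.V1 m a"]
    by (simp add: ac_simps)
  have GGeq: "sw.GG = t.GG"
  proof -
    have l1: "(\<lambda>m. t.ZZ m / (t.s1 m * t.s2 m)) \<longlonglongrightarrow> t.GG" using t.ZZ_lim t.LZ_eq by (simp add: t.GG_def)
    have l2: "(\<lambda>m. sw.ZZ m / (sw.s1 m * sw.s2 m)) \<longlonglongrightarrow> sw.GG" using sw.ZZ_lim sw.LZ_eq by (simp add: sw.GG_def)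
    then have "(\<lambda>m. t.ZZ m / (t.s1 m * t.s2 m)) \<longlonglongrightarrow> sw.GG" unfolding ZZeq U by (simp add: mult.commute)
    then show ?thesis using l1 LIMSEQ_unique by blast
  qed
  have IIeq: "sw.II = t.II"
    unfolding sw.II_def t.II_def
    by (subst reflect_set_integral) (simp add: mult.commute)
  have AAeq: "sw.AA1 = std_normal_density (\<gamma>1 * sqrt (\<alpha>1 / \<alpha>2) - \<beta>2) / sqrt \<alpha>2 * Phi (- \<gamma>1 - \<beta>1)
              + t.II / sqrt (\<alpha>1 * \<alpha>2)"
    unfolding sw.AA1_def IIeq by (simp add: mult.commute)
  have equiv: "(\<lambda>m. B m) \<sim>[sequentially] (\<lambda>m. 1 / sqrt (N m) * c)"
    if lim: "(\<lambda>m. sqrt (N m) * B m) \<longlonglongrightarrow> c" and c: "c \<noteq> 0" for B :: "nat \<Rightarrow> real" and c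
  proof (rule asymp_equivI')
    have "(\<lambda>m. sqrt (N m) * B m / c) \<longlonglongrightarrow> c / c" by (intro tendsto_divide lim tendsto_const c)
    moreover have "sqrt (N m) * B m / c = B m / (1 / sqrt (N m) * c)" for m
      using t.Npos[of m] c by (simp add: field_simps)
    ultimately show "(\<lambda>m. B m / (1 / sqrt (N m) * c)) \<longlonglongrightarrow> 1" using c by simp
  qed
  have r1: "(\<lambda>m. B1_bo (N1 m) (N2 m) (k1 m) (k2 m) (l1 m) (l2 m) (u1 m) (u2 m)) \<sim>[sequentially] (\<lambda>m. 1 / sqrt (N m) * (t.AA1 / t.GG))"
    by (rule equiv) (use t.main_lim t.AA1_pos t.GG_pos in \<open>simp_all add: B1eq\<close>)
  have r2: "(\<lambda>m. B2_bo (N1 m) (N2 m) (k1 m) (k2 m) (l1 m) (l2 m) (u1 m) (u2 m)) \<sim>[sequentially] (\<lambda>m. 1 / sqrt (N m) * (sw.AA1 / sw.GG))"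
    by (rule equiv) (use sw.main_lim sw.AA1_pos sw.GG_pos in \<open>simp_all add: B2eq\<close>)
  show ?thesis
    using r1 r2 unfolding Let_def GGeq AAeq by (simp add: t.AA1_def t.GG_def t.II_def)
qed

end
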